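(* Let $\{T_i\}_{i=1}^M$ be a quantum $1$-tester on $\mathcal H_2\otimes\mathcal H_1$ with $\sum_iT_i=I_2\otimes\rho$, and let $r$ be the rank of $\rho$. Then $\{T_i\}$ is extremal if and only if the equation $$\sum_{i=1}^M\sum_{n,m}D^{(i)}_{nm}|v^i_n\rangle\langle v^i_m|+\sum_{l=1}^{r^2-1}s_l\,I_2\otimes\sigma_l=0,$$ with each $(D^{(i)}_{nm})_{n,m}$ a hermitian matrix and $s_l\in\mathbb R$, has only the trivial solution.
   Context: A quantum $1$-tester with $M$ outcomes on $\mathcal H_2\otimes\mathcal H_1$ (finite-dimensional) is a family of positive operators $\{T_i\}_{i=1}^M$ with $\sum_iT_i=I_2\otimes\rho$ for some density operator $\rho$ on $\mathcal H_1$; it is extremal if it is an extreme point of the convex set of all such testers with $M$ outcomes. $\{|v^i_n\rangle\}_n$ is an orthonormal set of eigenvectors of $T_i$ spanning $\operatorname{Supp}(T_i)$; $\{\sigma_l\}_{l=1}^{r^2-1}$ is a basis of the traceless hermitian operators on $\mathcal H_1$ with support contained in $\operatorname{Supp}(\rho)$. *)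

theory Defs
  imports Complex_Main "Jordan_Normal_Form.Matrix" "Jordan_Normal_Form.DL_Rank"
begin

text \<open>The space H2 (x) H1 with dim H2 = d2, dim H1 = d1 is realised as C^(d2*d1),
  the basis vector e_a (x) e_b corresponding to index a * d1 + b.\<close>

definition mtrace :: "complex mat \<Rightarrow> complex" where
  "mtrace A = (\<Sum>a<dim_row A. A $$ (a, a))"

definition cinner :: "complex vec \<Rightarrow> complex vec \<Rightarrow> complex" where
  "cinner x y = (\<Sum>a<dim_vec x. cnj (x $ a) * y $ a)"

definition hermitian :: "nat \<Rightarrow> complex mat \<Rightarrow> bool" where
  "hermitian n A \<longleftrightarrow> A \<in> carrier_mat n n \<and>
     (\<forall>a<n. \<forall>b<n. A $$ (a, b) = cnj (A $$ (b, a)))"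

definition positive_op :: "nat \<Rightarrow> complex mat \<Rightarrow> bool" where
  "positive_op n A \<longleftrightarrow> hermitian n A \<and>
     (\<forall>x \<in> carrier_vec n. cinner x (A *\<^sub>v x) \<in> \<real> \<and> 0 \<le> Re (cinner x (A *\<^sub>v x)))"

definition density_op :: "nat \<Rightarrow> complex mat \<Rightarrow> bool" where
  "density_op n \<rho> \<longleftrightarrow> positive_op n \<rho> \<and> mtrace \<rho> = 1"

definition kron :: "complex mat \<Rightarrow> complex mat \<Rightarrow> complex mat" where
  "kron A B = mat (dim_row A * dim_row B) (dim_col A * dim_col B)
     (\<lambda>(i, j). A $$ (i div dim_row B, j div dim_col B) * B $$ (i mod dim_row B, j mod dim_col B))"

text \<open>Support of an operator = its range (for hermitian operators this is the
  orthogonal complement of the kernel).\<close>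
definition supp :: "complex mat \<Rightarrow> complex vec set" where
  "supp A = {A *\<^sub>v x | x. x \<in> carrier_vec (dim_col A)}"

definition cspan :: "nat \<Rightarrow> nat \<Rightarrow> (nat \<Rightarrow> complex vec) \<Rightarrow> complex vec set" where
  "cspan n k v = {vec n (\<lambda>a. \<Sum>j<k. c j * v j $ a) | c. True}"

definition is_tester_with :: "nat \<Rightarrow> nat \<Rightarrow> nat \<Rightarrow> (nat \<Rightarrow> complex mat) \<Rightarrow> complex mat \<Rightarrow> bool" where
  "is_tester_with d2 d1 M T \<rho> \<longleftrightarrow>
     density_op d1 \<rho> \<and> (\<forall>i<M. positive_op (d2 * d1) (T i)) \<and>
     mat (d2 * d1) (d2 * d1) (\<lambda>(a, b). \<Sum>i<M. T i $$ (a, b)) = kron (1\<^sub>m d2) \<rho>"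

definition is_tester :: "nat \<Rightarrow> nat \<Rightarrow> nat \<Rightarrow> (nat \<Rightarrow> complex mat) \<Rightarrow> bool" where
  "is_tester d2 d1 M T \<longleftrightarrow> (\<exists>\<rho>. is_tester_with d2 d1 M T \<rho>)"

text \<open>Extreme point of the convex set of testers with M outcomes
  (families are compared on the outcomes 0..M-1 only).\<close>
definition extremal_tester :: "nat \<Rightarrow> nat \<Rightarrow> nat \<Rightarrow> (nat \<Rightarrow> complex mat) \<Rightarrow> bool" where
  "extremal_tester d2 d1 M T \<longleftrightarrow> is_tester d2 d1 M T \<and>
     (\<forall>T' T'' (t::real). is_tester d2 d1 M T' \<and> is_tester d2 d1 M T'' \<and> 0 < t \<and> t < 1 \<and>
        (\<forall>i<M. T i = complex_of_real t \<cdot>\<^sub>m T' i + complex_of_real (1 - t) \<cdot>\<^sub>m T'' i)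
        \<longrightarrow> (\<forall>i<M. T' i = T'' i))"

end

theory Submission
  imports Defs
begin


definition hip :: "nat \<Rightarrow> (nat \<Rightarrow> complex) \<Rightarrow> (nat \<Rightarrow> complex) \<Rightarrow> complex" where
  "hip n f g = (\<Sum>a<n. cnj (f a) * g a)"

definition hmv :: "nat \<Rightarrow> complex mat \<Rightarrow> (nat \<Rightarrow> complex) \<Rightarrow> nat \<Rightarrow> complex" where
  "hmv n A f = (\<lambda>a. \<Sum>b<n. A $$ (a, b) * f b)"

definition hqf :: "nat \<Rightarrow> complex mat \<Rightarrow> (nat \<Rightarrow> complex) \<Rightarrow> complex" where
  "hqf n A f = hip n f (hmv n A f)"

lemma hip_cong: "(\<And>a. a < n \<Longrightarrow> f a = f' a) \<Longrightarrow> (\<And>a. a < n \<Longrightarrow> g a = g' a) \<Longrightarrow> hip n f g = hip n f' g'"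
  unfolding hip_def by (rule sum.cong) auto

lemma hmv_cong: "(\<And>b. b < n \<Longrightarrow> f b = f' b) \<Longrightarrow> hmv n A f a = hmv n A f' a"
  unfolding hmv_def by (rule sum.cong) auto

lemma hip_add_right: "hip n f (\<lambda>a. g a + h a) = hip n f g + hip n f h"
  unfolding hip_def by (simp add: distrib_left sum.distrib)

lemma hip_diff_right: "hip n f (\<lambda>a. g a - h a) = hip n f g - hip n f h"
  unfolding hip_def by (simp add: right_diff_distrib sum_subtractf)

lemma hip_scale_right: "hip n f (\<lambda>a. c * g a) = c * hip n f g"
  unfolding hip_def by (simp add: sum_distrib_left mult.assoc mult.left_commute)

lemma hip_sum_right: "hip n f (\<lambda>a. \<Sum>j\<in>J. g j a) = (\<Sum>j\<in>J. hip n f (g j))"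
  unfolding hip_def by (simp add: sum_distrib_left sum.swap[of _ J])

lemma hip_cnj: "hip n g f = cnj (hip n f g)"
  unfolding hip_def by (simp add: mult.commute)

lemma hip_add_left: "hip n (\<lambda>a. g a + h a) f = hip n g f + hip n h f"
  by (subst hip_cnj, simp add: hip_add_right, simp add: hip_cnj[of n f])

lemma hip_diff_left: "hip n (\<lambda>a. g a - h a) f = hip n g f - hip n h f"
  by (subst hip_cnj, simp add: hip_diff_right, simp add: hip_cnj[of n f])

lemma hip_scale_left: "hip n (\<lambda>a. c * g a) f = cnj c * hip n g f"
  by (subst hip_cnj, simp add: hip_scale_right, simp add: hip_cnj[of n f])

lemma hip_sum_left: "hip n (\<lambda>a. \<Sum>j\<in>J. g j a) f = (\<Sum>j\<in>J. hip n (g j) f)"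
  by (subst hip_cnj, simp add: hip_sum_right, simp add: hip_cnj[of n f])

lemma hip_self: "hip n f f = of_real (\<Sum>a<n. (cmod (f a))\<^sup>2)"
  unfolding hip_def of_real_sum by (rule sum.cong, simp, metis complex_norm_square mult.commute)

lemma hip_self_Re: "Re (hip n f f) = (\<Sum>a<n. (cmod (f a))\<^sup>2)"
  by (simp add: hip_self)

lemma hip_self_nonneg: "0 \<le> Re (hip n f f)"
  by (simp add: hip_self_Re sum_nonneg)

lemma hip_self_zero: assumes "hip n f f = 0" "a < n" shows "f a = 0"
proof -
  have "(\<Sum>a<n. (cmod (f a))\<^sup>2) = 0" using assms(1) hip_self_Re[of n f] by simp
  hence "\<forall>a\<in>{..<n}. (cmod (f a))\<^sup>2 = 0" by (subst sum_nonneg_eq_0_iff[symmetric]) auto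
  thus ?thesis using assms(2) by auto
qed

lemma hmv_add: "hmv n A (\<lambda>b. g b + h b) a = hmv n A g a + hmv n A h a"
  unfolding hmv_def by (simp add: distrib_left sum.distrib)

lemma hmv_diff: "hmv n A (\<lambda>b. g b - h b) a = hmv n A g a - hmv n A h a"
  unfolding hmv_def by (simp add: right_diff_distrib sum_subtractf)

lemma hmv_scale: "hmv n A (\<lambda>b. c * g b) a = c * hmv n A g a"
  unfolding hmv_def by (simp add: sum_distrib_left mult.assoc mult.left_commute)

lemma hmv_sum: "hmv n A (\<lambda>b. \<Sum>j\<in>J. g j b) a = (\<Sum>j\<in>J. hmv n A (g j) a)"
  unfolding hmv_def by (simp add: sum_distrib_left sum.swap[of _ J])

lemma hermitian_carrier: "hermitian n A \<Longrightarrow> A \<in> carrier_mat n n"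
  unfolding hermitian_def by auto

lemma hermitianD: "hermitian n A \<Longrightarrow> a < n \<Longrightarrow> b < n \<Longrightarrow> A $$ (a, b) = cnj (A $$ (b, a))"
  unfolding hermitian_def by blast

lemma hermitianD': "hermitian n A \<Longrightarrow> a < n \<Longrightarrow> b < n \<Longrightarrow> cnj (A $$ (b, a)) = A $$ (a, b)"
  using hermitianD[of n A a b] by (metis complex_cnj_cnj)

lemma hermitian_hip: assumes "hermitian n A"
  shows "hip n f (hmv n A g) = hip n (hmv n A f) g"
proof -
  have h: "\<And>a b. a < n \<Longrightarrow> b < n \<Longrightarrow> cnj (A $$ (b, a)) = A $$ (a, b)"
    using hermitianD'[OF assms] by blast
  have "hip n f (hmv n A g) = (\<Sum>a<n. \<Sum>b<n. cnj (f a) * (A $$ (a, b) * g b))"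
    unfolding hip_def hmv_def by (simp only: sum_distrib_left)
  also have "\<dots> = (\<Sum>b<n. \<Sum>a<n. cnj (f a) * (A $$ (a, b) * g b))" by (rule sum.swap)
  also have "\<dots> = (\<Sum>b<n. cnj (\<Sum>a<n. A $$ (b, a) * f a) * g b)"
  proof (rule sum.cong[OF refl])
    fix b assume b: "b \<in> {..<n}"
    have "cnj (\<Sum>a<n. A $$ (b, a) * f a) * g b = (\<Sum>a<n. cnj (A $$ (b, a)) * cnj (f a) * g b)"
      by (simp only: cnj_sum complex_cnj_mult sum_distrib_right)
    also have "\<dots> = (\<Sum>a<n. cnj (f a) * (A $$ (a, b) * g b))"
      by (rule sum.cong[OF refl]) (use b h in auto)
    finally show "(\<Sum>a<n. cnj (f a) * (A $$ (a, b) * g b)) = cnj (\<Sum>a<n. A $$ (b, a) * f a) * g b" by simp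
  qed
  also have "\<dots> = hip n (hmv n A f) g" unfolding hip_def hmv_def by simp
  finally show ?thesis .
qed

lemma hermitian_hqf_real: assumes "hermitian n A" shows "hqf n A f \<in> \<real>"
proof -
  have "hqf n A f = cnj (hqf n A f)"
    unfolding hqf_def by (subst hermitian_hip[OF assms], subst hip_cnj, simp)
  thus ?thesis using Reals_cnj_iff by metis
qed

lemma cinner_hip: "x \<in> carrier_vec n \<Longrightarrow> cinner x y = hip n (\<lambda>a. x $ a) (\<lambda>a. y $ a)"
  unfolding cinner_def hip_def by auto

lemma mult_mat_vec_hmv: "A \<in> carrier_mat m n \<Longrightarrow> x \<in> carrier_vec n \<Longrightarrow> a < m \<Longrightarrow>
   (A *\<^sub>v x) $ a = hmv n A (\<lambda>b. x $ b) a"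
  unfolding hmv_def by (auto simp: scalar_prod_def mult.commute atLeast0LessThan)

lemma cinner_hqf: assumes "A \<in> carrier_mat n n" "x \<in> carrier_vec n"
  shows "cinner x (A *\<^sub>v x) = hqf n A (\<lambda>a. x $ a)"
  unfolding hqf_def using assms
  unfolding cinner_hip[OF assms(2)]
  by (intro hip_cong) (auto simp: mult_mat_vec_hmv[OF assms(1,2)] simp del: index_mult_mat_vec)

lemma positive_op_iff: "positive_op n A \<longleftrightarrow> hermitian n A \<and> (\<forall>f. hqf n A f \<in> \<real> \<and> 0 \<le> Re (hqf n A f))"
proof
  assume p: "positive_op n A"
  hence h: "hermitian n A" unfolding positive_op_def by auto
  show "hermitian n A \<and> (\<forall>f. hqf n A f \<in> \<real> \<and> 0 \<le> Re (hqf n A f))"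
  proof (intro conjI allI h)
    fix f :: "nat \<Rightarrow> complex"
    have x: "vec n f \<in> carrier_vec n" by simp
    have "hqf n A f = hqf n A (\<lambda>a. vec n f $ a)"
      unfolding hqf_def by (intro hip_cong hmv_cong) auto
    also have "\<dots> = cinner (vec n f) (A *\<^sub>v vec n f)"
      using cinner_hqf[OF hermitian_carrier[OF h] x] by simp
    finally have e: "hqf n A f = cinner (vec n f) (A *\<^sub>v vec n f)" .
    show "hqf n A f \<in> \<real>" "0 \<le> Re (hqf n A f)" using p x unfolding positive_op_def e by auto
  qed
next
  assume "hermitian n A \<and> (\<forall>f. hqf n A f \<in> \<real> \<and> 0 \<le> Re (hqf n A f))"
  thus "positive_op n A" unfolding positive_op_def
    using cinner_hqf[OF hermitian_carrier] by auto
qed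


lemma hqf_expand:
  "hqf n A (\<lambda>b. f b + c * y b) = hqf n A f + c * hip n f (hmv n A y) + cnj c * hip n y (hmv n A f) + cnj c * c * hqf n A y"
proof -
  have m: "hmv n A (\<lambda>b. f b + c * y b) = (\<lambda>a. hmv n A f a + c * hmv n A y a)"
    by (rule ext) (simp add: hmv_add hmv_scale)
  show ?thesis unfolding hqf_def m
    by (simp add: hip_add_left hip_add_right hip_scale_left hip_scale_right algebra_simps)
qed

lemma psd_zero: assumes p: "positive_op n A" and z: "hqf n A f = 0" and a: "a < n"
  shows "hmv n A f a = 0"
proof -
  define y where "y = hmv n A f"
  have h: "hermitian n A" and q: "\<And>g. hqf n A g \<in> \<real> \<and> 0 \<le> Re (hqf n A g)"
    using p unfolding positive_op_iff by auto
  have e1: "hip n f (hmv n A y) = hip n y y" unfolding y_def using hermitian_hip[OF h] by simp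
  have e2: "hip n y (hmv n A f) = hip n y y" unfolding y_def by simp
  define g where "g = Re (hip n y y)"
  define hh where "hh = Re (hqf n A y)"
  have g0: "0 \<le> g" unfolding g_def by (rule hip_self_nonneg)
  have h0: "0 \<le> hh" unfolding hh_def using q by auto
  have key: "\<And>t::real. 0 \<le> 2 * t * g + t * t * hh"
  proof -
    fix t :: real
    have "hqf n A (\<lambda>b. f b + complex_of_real t * y b) = 2 * complex_of_real t * hip n y y + complex_of_real t * complex_of_real t * hqf n A y"
      unfolding hqf_expand e1 e2 z by simp
    hence "Re (hqf n A (\<lambda>b. f b + complex_of_real t * y b)) = 2 * t * g + t * t * hh"
      unfolding g_def hh_def by simp
    thus "0 \<le> 2 * t * g + t * t * hh" using q by metis
  qed
  have "g = 0"
  proof (rule ccontr)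
    assume "g \<noteq> 0"
    hence gp: "0 < g" using g0 by auto
    define t where "t = - g / (hh + 1)"
    have hp: "0 < hh + 1" using h0 by auto
    have tn: "t < 0" unfolding t_def using gp hp by (simp add: divide_pos_pos)
    have "- (t * hh) = g * (hh / (hh + 1))" unfolding t_def by simp
    also have "\<dots> \<le> g * 1" using gp hp h0 by (intro mult_left_mono) auto
    finally have "0 < 2 * g + t * hh" using gp by simp
    hence "t * (2 * g + t * hh) < 0" using tn by (simp add: mult_neg_pos)
    hence "2 * t * g + t * t * hh < 0" by (simp add: algebra_simps)
    thus False using key[of t] by simp
  qed
  hence "hip n y y = 0" unfolding g_def by (simp add: hip_self)
  thus ?thesis using hip_self_zero a unfolding y_def by metis
qed

lemma proj_exists:
  fixes K :: nat and w :: "nat \<Rightarrow> nat \<Rightarrow> complex" and y :: "nat \<Rightarrow> complex"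
  shows   "\<exists>c. \<forall>k<K. hip n (w k) (\<lambda>a. y a - (\<Sum>j<K. c j * w j a)) = 0"
proof (induction K arbitrary: y)
  case 0
  then show ?case by simp
next
  case (Suc K)
  obtain a where a: "\<forall>k<K. hip n (w k) (\<lambda>x. w K x - (\<Sum>j<K. a j * w j x)) = 0"
    using Suc.IH by blast
  obtain b where b: "\<forall>k<K. hip n (w k) (\<lambda>x. y x - (\<Sum>j<K. b j * w j x)) = 0"
    using Suc.IH by blast
  define rw where "rw = (\<lambda>x. w K x - (\<Sum>j<K. a j * w j x))"
  define ry where "ry = (\<lambda>x. y x - (\<Sum>j<K. b j * w j x))"
  have orth: "\<And>c. hip n (\<lambda>x. \<Sum>j<K. c j * w j x) ry = 0"
    using b unfolding ry_def by (simp add: hip_sum_left hip_scale_left)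
  have orthw: "\<And>c. hip n (\<lambda>x. \<Sum>j<K. c j * w j x) rw = 0"
    using a unfolding rw_def by (simp add: hip_sum_left hip_scale_left)
  have wK: "w K = (\<lambda>x. rw x + (\<Sum>j<K. a j * w j x))" unfolding rw_def by auto
  show ?case
  proof (cases "hip n rw rw = 0")
    case True
    define c where "c = b(K := 0)"
    have s: "(\<lambda>x. y x - (\<Sum>j<Suc K. c j * w j x)) = ry"
      unfolding ry_def c_def by (auto intro!: sum.cong)
    have rw0: "\<And>x. x < n \<Longrightarrow> rw x = 0" using hip_self_zero[OF True] by blast
    have "hip n rw ry = 0" unfolding hip_def by (rule sum.neutral) (simp add: rw0)
    hence "hip n (w K) ry = 0" unfolding wK hip_add_left orth by simp
    note wK0 = this
    show ?thesis
    proof (intro exI[of _ c] allI impI)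
      fix k assume "k < Suc K"
      then consider "k < K" | "k = K" by linarith
      thus "hip n (w k) (\<lambda>a. y a - (\<Sum>j<Suc K. c j * w j a)) = 0"
        unfolding s by cases (use b wK0 ry_def in auto)
    qed
  next
    case False
    define \<alpha> where "\<alpha> = hip n rw ry / hip n rw rw"
    define c where "c = (\<lambda>j. if j < K then b j - \<alpha> * a j else \<alpha>)"
    have s: "(\<lambda>x. y x - (\<Sum>j<Suc K. c j * w j x)) = (\<lambda>x. ry x - \<alpha> * rw x)"
      unfolding ry_def rw_def c_def
      by (rule ext) (simp add: algebra_simps sum.distrib sum_subtractf sum_distrib_left)
    have o1: "\<And>k. k < K \<Longrightarrow> hip n (w k) (\<lambda>x. ry x - \<alpha> * rw x) = 0"
      using a b unfolding ry_def rw_def by (simp add: hip_diff_right hip_scale_right)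
    have o2: "hip n rw (\<lambda>x. ry x - \<alpha> * rw x) = 0"
      unfolding hip_diff_right hip_scale_right \<alpha>_def using False by simp
    have o3: "hip n (\<lambda>x. \<Sum>j<K. a j * w j x) (\<lambda>x. ry x - \<alpha> * rw x) = 0"
      unfolding hip_diff_right hip_scale_right orth orthw by simp
    have "hip n (w K) (\<lambda>x. ry x - \<alpha> * rw x) = 0"
      unfolding wK hip_add_left o2 o3 by simp
    note wK0 = this
    show ?thesis
    proof (intro exI[of _ c] allI impI)
      fix k assume "k < Suc K"
      then consider "k < K" | "k = K" by linarith
      thus "hip n (w k) (\<lambda>a. y a - (\<Sum>j<Suc K. c j * w j a)) = 0"
        unfolding s by cases (use o1 wK0 in auto)
    qed
  qed
qed



lemma range_herm: assumes h: "hermitian n H"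
  and k: "\<And>z. (\<forall>a<n. hmv n H z a = 0) \<Longrightarrow> hip n z y = 0"
  shows "\<exists>x. \<forall>a<n. y a = hmv n H x a"
proof -
  obtain c where c: "\<forall>k<n. hip n (\<lambda>a. H $$ (a, k)) (\<lambda>a. y a - (\<Sum>j<n. c j * H $$ (a, j))) = 0"
    using proj_exists[of n n "\<lambda>k a. H $$ (a, k)" y] by blast
  define r where "r = (\<lambda>a. y a - hmv n H c a)"
  have r': "(\<lambda>a. y a - (\<Sum>j<n. c j * H $$ (a, j))) = r"
    unfolding r_def hmv_def by (simp add: mult.commute)
  have Hr: "\<forall>a<n. hmv n H r a = 0"
  proof (intro allI impI)
    fix a assume a: "a < n"
    have "hmv n H r a = hip n (\<lambda>b. H $$ (b, a)) r"
      unfolding hmv_def hip_def by (rule sum.cong[OF refl]) (use a hermitianD'[OF h] in auto)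
    thus "hmv n H r a = 0" using c a r' by simp
  qed
  have 1: "hip n r y = 0" using k[OF Hr] .
  have "hip n r (hmv n H c) = hip n (hmv n H r) c" by (rule hermitian_hip[OF h])
  also have "\<dots> = hip n (\<lambda>_. 0) c" by (rule hip_cong) (use Hr in auto)
  also have "\<dots> = 0" unfolding hip_def by simp
  finally have 2: "hip n r (hmv n H c) = 0" .
  have "hip n r r = 0" using 1 2 unfolding r_def[of] hip_diff_right[symmetric]
    by (simp add: hip_diff_right)
  hence "\<forall>a<n. r a = 0" using hip_self_zero by blast
  thus ?thesis unfolding r_def by (intro exI[of _ c]) auto
qed

lemma kron_one_carrier: "A \<in> carrier_mat d1 d1 \<Longrightarrow> kron (1\<^sub>m d2) A \<in> carrier_mat (d2 * d1) (d2 * d1)"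
  unfolding kron_def by auto

lemma kron_one_entry: assumes "A \<in> carrier_mat d1 d1" "a < d2 * d1" "b < d2 * d1"
  shows "kron (1\<^sub>m d2) A $$ (a, b) = (if a div d1 = b div d1 then A $$ (a mod d1, b mod d1) else 0)"
proof -
  have "a div d1 < d2" "b div d1 < d2" using assms(2,3)
    by (metis less_mult_imp_div_less mult.commute)+
  thus ?thesis unfolding kron_def using assms by auto
qed

lemma kron_one_entry_small: assumes "A \<in> carrier_mat d1 d1" "0 < d2" "a < d1" "b < d1"
  shows "kron (1\<^sub>m d2) A $$ (a, b) = A $$ (a, b)"
proof -
  have le: "d1 \<le> d2 * d1" using assms(2) by simp
  have "a < d2 * d1" "b < d2 * d1" using le assms(3,4) by linarith+
  thus ?thesis using kron_one_entry[OF assms(1)] assms(3,4) by simp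
qed

definition lift :: "nat \<Rightarrow> (nat \<Rightarrow> complex) \<Rightarrow> nat \<Rightarrow> complex" where
  "lift d1 u = (\<lambda>a. if a < d1 then u a else 0)"

lemma sum_lift: fixes g :: "nat \<Rightarrow> complex" assumes "d1 \<le> N"
  shows "(\<Sum>a<N. if a < d1 then g a else 0) = (\<Sum>a<d1. g a)"
proof -
  have "(\<Sum>a<N. if a < d1 then g a else 0) = (\<Sum>a\<in>{..<N} \<inter> {a. a < d1}. g a)"
    by (simp add: sum.inter_restrict)
  also have "{..<N} \<inter> {a. a < d1} = {..<d1}" using assms by auto
  finally show ?thesis .
qed

lemma hqf_kron_lift: assumes d2: "0 < d2" and A: "A \<in> carrier_mat d1 d1"
  shows "hqf (d2 * d1) (kron (1\<^sub>m d2) A) (lift d1 u) = hqf d1 A u"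
proof -
  have le: "d1 \<le> d2 * d1" using d2 by simp
  let ?K = "kron (1\<^sub>m d2) A"
  have m: "\<And>a. a < d1 \<Longrightarrow> hmv (d2 * d1) ?K (lift d1 u) a = hmv d1 A u a"
  proof -
    fix a assume a: "a < d1"
    have "hmv (d2 * d1) ?K (lift d1 u) a = (\<Sum>b<d2 * d1. if b < d1 then ?K $$ (a, b) * u b else 0)"
      unfolding hmv_def lift_def by (rule sum.cong) auto
    also have "\<dots> = (\<Sum>b<d1. ?K $$ (a, b) * u b)" by (rule sum_lift[OF le])
    also have "\<dots> = hmv d1 A u a" unfolding hmv_def
      by (rule sum.cong[OF refl]) (use a d2 in \<open>auto simp: kron_one_entry_small[OF A]\<close>)
    finally show "hmv (d2 * d1) ?K (lift d1 u) a = hmv d1 A u a" .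
  qed
  have "hqf (d2 * d1) ?K (lift d1 u) = (\<Sum>a<d2 * d1. if a < d1 then cnj (u a) * hmv d1 A u a else 0)"
    unfolding hqf_def hip_def
  proof (rule sum.cong[OF refl])
    fix a assume "a \<in> {..<d2 * d1}"
    show "cnj (lift d1 u a) * hmv (d2 * d1) ?K (lift d1 u) a = (if a < d1 then cnj (u a) * hmv d1 A u a else 0)"
    proof (cases "a < d1")
      case True
      then show ?thesis using m[OF True] by (simp add: lift_def)
    qed (simp add: lift_def)
  qed
  also have "\<dots> = hqf d1 A u" unfolding hqf_def hip_def by (rule sum_lift[OF le])
  finally show ?thesis .
qed

lemma hqf_sum: assumes "\<And>a b. a < n \<Longrightarrow> b < n \<Longrightarrow> A $$ (a, b) = (\<Sum>i\<in>I. T i $$ (a, b))"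
  shows "hqf n A f = (\<Sum>i\<in>I. hqf n (T i) f)"
proof -
  have "hqf n A f = hip n f (\<lambda>a. \<Sum>i\<in>I. hmv n (T i) f a)"
    unfolding hqf_def by (rule hip_cong) (auto simp: hmv_def assms sum_distrib_right intro: sum.swap)
  thus ?thesis by (simp add: hip_sum_right hqf_def)
qed

lemma hqf_lin: assumes "\<And>a b. a < n \<Longrightarrow> b < n \<Longrightarrow> A $$ (a, b) = x * B $$ (a, b) + y * C $$ (a, b)"
  shows "hqf n A f = x * hqf n B f + y * hqf n C f"
proof -
  have "hqf n A f = hip n f (\<lambda>a. x * hmv n B f a + y * hmv n C f a)"
    unfolding hqf_def by (rule hip_cong) (auto simp: hmv_def assms distrib_right sum.distrib sum_distrib_left mult.assoc)
  thus ?thesis by (simp add: hip_add_right hip_scale_right hqf_def)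
qed




lemma orth_decomp: fixes k :: nat assumes on: "\<And>n m. n < k \<Longrightarrow> m < k \<Longrightarrow> hip N (v n) (v m) = (if n = m then 1 else 0)"
  and p: "p < k"
  shows "hip N (v p) (\<lambda>a. f a - (\<Sum>m<k. hip N (v m) f * v m a)) = 0"
proof -
  have "hip N (v p) (\<lambda>a. \<Sum>m<k. hip N (v m) f * v m a) = (\<Sum>m<k. hip N (v m) f * hip N (v p) (v m))"
    by (simp add: hip_sum_right hip_scale_right)
  also have "\<dots> = (\<Sum>m<k. if m = p then hip N (v m) f else 0)"
    by (rule sum.cong[OF refl]) (auto simp: on p)
  also have "\<dots> = hip N (v p) f" using sum.delta[of "{..<k}" p "\<lambda>m. hip N (v m) f"] p by simp
  finally show ?thesis by (simp add: hip_diff_right)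
qed

lemma hmv_expand: fixes k :: nat assumes on: "\<And>n m. n < k \<Longrightarrow> m < k \<Longrightarrow> hip N (v n) (v m) = (if n = m then 1 else 0)"
  and kill: "\<And>g. (\<forall>m<k. hip N (v m) g = 0) \<Longrightarrow> (\<forall>a<N. hmv N A g a = 0)"
  and a: "a < N"
  shows "hmv N A f a = (\<Sum>m<k. hip N (v m) f * hmv N A (v m) a)"
proof -
  have "\<forall>a<N. hmv N A (\<lambda>a. f a - (\<Sum>m<k. hip N (v m) f * v m a)) a = 0"
    by (rule kill) (use orth_decomp[OF on] in blast)
  hence "hmv N A (\<lambda>a. f a - (\<Sum>m<k. hip N (v m) f * v m a)) a = 0" using a by blast
  thus ?thesis by (simp add: hmv_diff hmv_sum hmv_scale)
qed

lemma kill_orth: fixes k :: nat assumes h: "hermitian N T"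
  and span: "\<And>f. \<exists>c. \<forall>a<N. hmv N T f a = (\<Sum>j<k. c j * v j a)"
  and g: "\<forall>m<k. hip N (v m) g = 0"
  shows "\<forall>a<N. hmv N T g a = 0"
proof -
  define y where "y = hmv N T g"
  obtain c where c: "\<forall>a<N. hmv N T y a = (\<Sum>j<k. c j * v j a)" using span by blast
  have "hip N y y = hip N g (hmv N T y)" unfolding y_def by (rule hermitian_hip[OF h, symmetric])
  also have "\<dots> = hip N g (\<lambda>a. \<Sum>j<k. c j * v j a)" by (rule hip_cong) (use c in auto)
  also have "\<dots> = (\<Sum>j<k. c j * cnj (hip N (v j) g))"
    by (simp add: hip_sum_right hip_scale_right hip_cnj[of N g])
  also have "\<dots> = 0" using g by simp
  finally show ?thesis unfolding y_def using hip_self_zero by blast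
qed

lemma sum_delta_mult: fixes g :: "nat \<Rightarrow> complex" assumes "b < N"
  shows "(\<Sum>x<N. g x * (if x = b then 1 else 0)) = g b"
proof -
  have "(\<Sum>x<N. g x * (if x = b then 1 else 0)) = (\<Sum>x<N. if x = b then g x else 0)"
    by (rule sum.cong) auto
  also have "\<dots> = g b" using sum.delta[of "{..<N}" b g] assms by simp
  finally show ?thesis .
qed

lemma rep: fixes k :: nat assumes h: "hermitian N A"
  and on: "\<And>n m. n < k \<Longrightarrow> m < k \<Longrightarrow> hip N (v n) (v m) = (if n = m then 1 else 0)"
  and kill: "\<And>g. (\<forall>m<k. hip N (v m) g = 0) \<Longrightarrow> (\<forall>a<N. hmv N A g a = 0)"
  and a: "a < N" and b: "b < N"
  shows "A $$ (a, b) = (\<Sum>n<k. \<Sum>m<k. hip N (v n) (hmv N A (v m)) * v n a * cnj (v m b))"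
proof -
  have B: "\<And>m a. a < N \<Longrightarrow> hmv N A (v m) a = (\<Sum>n<k. hip N (v n) (hmv N A (v m)) * v n a)"
  proof -
    fix m a assume a: "a < N"
    define u where "u = hmv N A (v m)"
    define w where "w = (\<lambda>a. u a - (\<Sum>n<k. hip N (v n) u * v n a))"
    have wo: "\<forall>p<k. hip N (v p) w = 0" unfolding w_def using orth_decomp[OF on] by blast
    have Aw: "\<forall>a<N. hmv N A w a = 0" by (rule kill[OF wo])
    have "hip N w w = hip N w (\<lambda>a. u a - (\<Sum>n<k. hip N (v n) u * v n a))"
      by (simp only: w_def[symmetric])
    also have "\<dots> = hip N w u - (\<Sum>n<k. hip N (v n) u * hip N w (v n))"
      by (simp add: hip_diff_right hip_sum_right hip_scale_right)
    also have "(\<Sum>n<k. hip N (v n) u * hip N w (v n)) = 0"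
      using wo by (simp add: hip_cnj[of N w])
    also have "hip N w u = hip N (hmv N A w) (v m)" unfolding u_def by (rule hermitian_hip[OF h])
    also have "\<dots> = hip N (\<lambda>_. 0) (v m)" by (rule hip_cong) (use Aw in auto)
    finally have "hip N w w = 0" by (simp add: hip_def)
    hence "w a = 0" using hip_self_zero a by blast
    thus "hmv N A (v m) a = (\<Sum>n<k. hip N (v n) (hmv N A (v m)) * v n a)" unfolding w_def u_def by simp
  qed
  define e where "e = (\<lambda>x. if x = b then (1::complex) else 0)"
  have "A $$ (a, b) = hmv N A e a" unfolding hmv_def e_def using sum_delta_mult[OF b] by simp
  also have "\<dots> = (\<Sum>m<k. hip N (v m) e * hmv N A (v m) a)" by (rule hmv_expand[OF on kill a])
  also have "\<dots> = (\<Sum>m<k. cnj (v m b) * (\<Sum>n<k. hip N (v n) (hmv N A (v m)) * v n a))"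
  proof (rule sum.cong[OF refl])
    fix m assume "m \<in> {..<k}"
    have "hip N (v m) e = cnj (v m b)" unfolding hip_def e_def using sum_delta_mult[OF b] by simp
    thus "hip N (v m) e * hmv N A (v m) a = cnj (v m b) * (\<Sum>n<k. hip N (v n) (hmv N A (v m)) * v n a)"
      using B[OF a, of m] by simp
  qed
  also have "\<dots> = (\<Sum>m<k. \<Sum>n<k. hip N (v n) (hmv N A (v m)) * v n a * cnj (v m b))"
    by (simp add: sum_distrib_left mult.commute mult.left_commute)
  also have "\<dots> = (\<Sum>n<k. \<Sum>m<k. hip N (v n) (hmv N A (v m)) * v n a * cnj (v m b))"
    by (rule sum.swap)
  finally show ?thesis .
qed




lemma mult_cnj_sq: "z * cnj z = (complex_of_real (cmod z))\<^sup>2"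
  by (metis complex_norm_square of_real_power)

lemma prod_le_sumsq: fixes c :: "nat \<Rightarrow> complex" assumes "n < k" "m < k"
  shows "cmod (c n) * cmod (c m) \<le> (\<Sum>j<k. (cmod (c j))\<^sup>2)"
proof -
  have 1: "(cmod (c n))\<^sup>2 \<le> (\<Sum>j<k. (cmod (c j))\<^sup>2)"
    using assms(1) by (intro member_le_sum) auto
  have 2: "(cmod (c m))\<^sup>2 \<le> (\<Sum>j<k. (cmod (c j))\<^sup>2)"
    using assms(2) by (intro member_le_sum) auto
  have "0 \<le> (cmod (c n) - cmod (c m))\<^sup>2" by simp
  hence "2 * (cmod (c n) * cmod (c m)) \<le> (cmod (c n))\<^sup>2 + (cmod (c m))\<^sup>2"
    by (simp add: power2_eq_square algebra_simps)
  thus ?thesis using 1 2 by linarith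
qed

lemma pos_bound: fixes k :: nat and lam :: "nat \<Rightarrow> real"
  assumes on: "\<And>n m. n < k \<Longrightarrow> m < k \<Longrightarrow> hip N (v n) (v m) = (if n = m then 1 else 0)"
  and kill: "\<And>g. (\<forall>m<k. hip N (v m) g = 0) \<Longrightarrow> (\<forall>a<N. hmv N T g a = 0)"
  and eig: "\<And>n a. n < k \<Longrightarrow> a < N \<Longrightarrow> hmv N T (v n) a = complex_of_real (lam n) * v n a"
  and lpos: "\<And>n. n < k \<Longrightarrow> 0 < lam n"
  and Dm: "\<And>a b. a < N \<Longrightarrow> b < N \<Longrightarrow> A $$ (a, b) = (\<Sum>n<k. \<Sum>m<k. D n m * v n a * cnj (v m b))"
  shows "\<exists>\<epsilon>>0. \<forall>f. \<epsilon> * \<bar>Re (hqf N A f)\<bar> \<le> Re (hqf N T f)"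
proof -
  define lmin where "lmin = Min (insert 1 (lam ` {..<k}))"
  have lmin_pos: "0 < lmin" unfolding lmin_def using lpos by (subst Min_gr_iff) auto
  have lmin_le: "\<And>n. n < k \<Longrightarrow> lmin \<le> lam n" unfolding lmin_def by (intro Min_le) auto
  define B where "B = (\<Sum>n<k. \<Sum>m<k. cmod (D n m))"
  have B0: "0 \<le> B" unfolding B_def by (intro sum_nonneg) auto
  define \<epsilon> where "\<epsilon> = lmin / (B + 1)"
  have \<epsilon>pos: "0 < \<epsilon>" unfolding \<epsilon>_def using lmin_pos B0 by simp
  show ?thesis
  proof (intro exI[of _ \<epsilon>] conjI allI \<epsilon>pos)
    fix f
    define c where "c = (\<lambda>n. hip N (v n) f)"
    define S where "S = (\<Sum>j<k. (cmod (c j))\<^sup>2)"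
    have S0: "0 \<le> S" unfolding S_def by (intro sum_nonneg) auto
    have mT: "\<And>a. a < N \<Longrightarrow> hmv N T f a = (\<Sum>m<k. c m * complex_of_real (lam m) * v m a)"
      unfolding c_def by (subst hmv_expand[OF on kill], assumption) (auto intro!: sum.cong simp: eig)
    have "hqf N T f = hip N f (\<lambda>a. \<Sum>m<k. c m * complex_of_real (lam m) * v m a)"
      unfolding hqf_def by (rule hip_cong) (auto simp: mT)
    also have "\<dots> = (\<Sum>m<k. c m * complex_of_real (lam m) * cnj (c m))"
      unfolding c_def by (simp add: hip_sum_right hip_scale_right hip_cnj[of N f])
    also have "\<dots> = (\<Sum>m<k. complex_of_real (lam m * (cmod (c m))\<^sup>2))"
      by (rule sum.cong[OF refl]) (simp add: mult_cnj_sq mult.commute mult.left_commute)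
    finally have qT: "Re (hqf N T f) = (\<Sum>m<k. lam m * (cmod (c m))\<^sup>2)" by (simp add: Re_sum)
    have "lmin * S = (\<Sum>m<k. lmin * (cmod (c m))\<^sup>2)" unfolding S_def by (simp add: sum_distrib_left)
    also have "\<dots> \<le> (\<Sum>m<k. lam m * (cmod (c m))\<^sup>2)"
      by (intro sum_mono mult_right_mono) (auto simp: lmin_le)
    finally have T_ge: "lmin * S \<le> Re (hqf N T f)" using qT by simp
    have mA: "\<And>a. a < N \<Longrightarrow> hmv N A f a = (\<Sum>n<k. \<Sum>m<k. D n m * c m * v n a)"
    proof -
      fix a assume a: "a < N"
      have "hmv N A f a = (\<Sum>b<N. \<Sum>n<k. \<Sum>m<k. D n m * v n a * (cnj (v m b) * f b))"
        unfolding hmv_def by (rule sum.cong[OF refl]) (auto simp: Dm a sum_distrib_right mult.assoc)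
      also have "\<dots> = (\<Sum>n<k. \<Sum>m<k. \<Sum>b<N. D n m * v n a * (cnj (v m b) * f b))"
        by (simp add: sum.swap[of _ "{..<N}"])
      also have "\<dots> = (\<Sum>n<k. \<Sum>m<k. D n m * c m * v n a)"
      proof (intro sum.cong refl)
        fix n m
        show "(\<Sum>b<N. D n m * v n a * (cnj (v m b) * f b)) = D n m * c m * v n a"
          unfolding c_def hip_def by (simp add: sum_distrib_left sum_distrib_right ac_simps)
      qed
      finally show "hmv N A f a = (\<Sum>n<k. \<Sum>m<k. D n m * c m * v n a)" .
    qed
    have "hqf N A f = hip N f (\<lambda>a. \<Sum>n<k. \<Sum>m<k. D n m * c m * v n a)"
      unfolding hqf_def by (rule hip_cong) (auto simp: mA)
    also have "\<dots> = (\<Sum>n<k. \<Sum>m<k. D n m * c m * cnj (c n))"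
      unfolding c_def by (simp add: hip_sum_right hip_scale_right hip_cnj[of N f])
    finally have qA: "hqf N A f = (\<Sum>n<k. \<Sum>m<k. D n m * c m * cnj (c n))" .
    have "\<bar>Re (hqf N A f)\<bar> \<le> cmod (hqf N A f)" by (rule abs_Re_le_cmod)
    also have "\<dots> \<le> (\<Sum>n<k. \<Sum>m<k. cmod (D n m * c m * cnj (c n)))"
      unfolding qA by (rule order_trans[OF norm_sum sum_mono]) (rule norm_sum)
    also have "\<dots> \<le> (\<Sum>n<k. \<Sum>m<k. cmod (D n m) * S)"
    proof (intro sum_mono)
      fix n m assume "n \<in> {..<k}" "m \<in> {..<k}"
      hence "cmod (c m) * cmod (c n) \<le> S" unfolding S_def by (intro prod_le_sumsq) auto
      thus "cmod (D n m * c m * cnj (c n)) \<le> cmod (D n m) * S"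
        by (simp add: norm_mult mult.assoc mult_left_mono)
    qed
    also have "\<dots> = B * S" unfolding B_def by (simp add: sum_distrib_right)
    finally have A_le: "\<bar>Re (hqf N A f)\<bar> \<le> B * S" .
    have "\<epsilon> * \<bar>Re (hqf N A f)\<bar> \<le> \<epsilon> * (B * S)" using A_le \<epsilon>pos by (simp add: mult_left_mono)
    also have "\<dots> = lmin * S * (B / (B + 1))" unfolding \<epsilon>_def using B0 by (simp add: field_simps)
    also have "\<dots> \<le> lmin * S * 1" using lmin_pos S0 B0 by (intro mult_left_mono) auto
    finally show "\<epsilon> * \<bar>Re (hqf N A f)\<bar> \<le> Re (hqf N T f)" using T_ge by simp
  qed
qed




lemma tester_density: "is_tester_with d2 d1 M T \<rho> \<Longrightarrow> density_op d1 \<rho>"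
  unfolding is_tester_with_def by auto

lemma tester_pos: "is_tester_with d2 d1 M T \<rho> \<Longrightarrow> i < M \<Longrightarrow> positive_op (d2 * d1) (T i)"
  unfolding is_tester_with_def by auto

lemma tester_sum: assumes "is_tester_with d2 d1 M T \<rho>" "a < d2 * d1" "b < d2 * d1"
  shows "(\<Sum>i<M. T i $$ (a, b)) = kron (1\<^sub>m d2) \<rho> $$ (a, b)"
proof -
  have "mat (d2 * d1) (d2 * d1) (\<lambda>(a, b). \<Sum>i<M. T i $$ (a, b)) = kron (1\<^sub>m d2) \<rho>"
    using assms(1) unfolding is_tester_with_def by auto
  hence "mat (d2 * d1) (d2 * d1) (\<lambda>(a, b). \<Sum>i<M. T i $$ (a, b)) $$ (a, b) = kron (1\<^sub>m d2) \<rho> $$ (a, b)"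
    by simp
  thus ?thesis using assms(2,3) by simp
qed

lemma density_herm: "density_op n \<rho> \<Longrightarrow> hermitian n \<rho>"
  unfolding density_op_def positive_op_def by auto

lemma pos_herm: "positive_op n A \<Longrightarrow> hermitian n A"
  unfolding positive_op_def by auto

lemma real_re_zero: fixes z :: complex shows "z \<in> \<real> \<Longrightarrow> Re z = 0 \<Longrightarrow> z = 0"
  by (metis Reals_cases complex.expand of_real_Re zero_complex.sel(1) zero_complex.sel(2) Im_complex_of_real)

lemma real_nonneg_sum_zero: fixes z :: "nat \<Rightarrow> complex"
  assumes p: "\<And>i. i \<in> I \<Longrightarrow> z i \<in> \<real> \<and> 0 \<le> Re (z i)" and f: "finite I" and s: "sum z I = 0" and i: "i \<in> I"
  shows "z i = 0"
proof -
  have "(\<Sum>j\<in>I. Re (z j)) = 0" using s by (simp add: Re_sum[symmetric])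
  hence "\<forall>j\<in>I. Re (z j) = 0" using p f by (subst sum_nonneg_eq_0_iff[symmetric]) auto
  thus ?thesis using p i real_re_zero by blast
qed

lemma hqf_zero_fn: "(\<forall>a<n. hmv n A g a = 0) \<Longrightarrow> hqf n A g = 0"
  unfolding hqf_def hip_def by (auto intro!: sum.neutral)

lemma qf_lift_sum: assumes d2: "0 < d2" and \<rho>: "\<rho> \<in> carrier_mat d1 d1"
  and s: "\<And>a b. a < d2 * d1 \<Longrightarrow> b < d2 * d1 \<Longrightarrow> (\<Sum>i\<in>I. T i $$ (a, b)) = kron (1\<^sub>m d2) \<rho> $$ (a, b)"
  shows "hqf d1 \<rho> u = (\<Sum>i\<in>I. hqf (d2 * d1) (T i) (lift d1 u))"
  using hqf_kron_lift[OF d2 \<rho>, of u] hqf_sum[where n="d2 * d1" and A="kron (1\<^sub>m d2) \<rho>" and I=I and T=T and f="lift d1 u"] s by simp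

lemma D_recover: fixes k :: nat
  assumes on: "\<And>n m. n < k \<Longrightarrow> m < k \<Longrightarrow> hip N (v n) (v m) = (if n = m then 1 else 0)"
  and Dm: "\<And>a b. a < N \<Longrightarrow> b < N \<Longrightarrow> A $$ (a, b) = (\<Sum>n<k. \<Sum>m<k. D n m * v n a * cnj (v m b))"
  and p: "p < k" and q: "q < k"
  shows "hip N (v p) (hmv N A (v q)) = D p q"
proof -
  have mA: "\<And>a. a < N \<Longrightarrow> hmv N A (v q) a = (\<Sum>n<k. D n q * v n a)"
  proof -
    fix a assume a: "a < N"
    have "hmv N A (v q) a = (\<Sum>b<N. \<Sum>n<k. \<Sum>m<k. D n m * v n a * (cnj (v m b) * v q b))"
      unfolding hmv_def by (rule sum.cong[OF refl]) (auto simp: Dm a sum_distrib_right mult.assoc)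
    also have "\<dots> = (\<Sum>n<k. \<Sum>m<k. \<Sum>b<N. D n m * v n a * (cnj (v m b) * v q b))"
      by (simp add: sum.swap[of _ "{..<N}"])
    also have "\<dots> = (\<Sum>n<k. \<Sum>m<k. D n m * v n a * hip N (v m) (v q))"
      unfolding hip_def by (simp add: sum_distrib_left)
    also have "\<dots> = (\<Sum>n<k. \<Sum>m<k. if m = q then D n m * v n a else 0)"
      by (intro sum.cong refl) (auto simp: on q)
    also have "\<dots> = (\<Sum>n<k. D n q * v n a)" using q by (simp add: sum.delta)
    finally show "hmv N A (v q) a = (\<Sum>n<k. D n q * v n a)" .
  qed
  have "hip N (v p) (hmv N A (v q)) = hip N (v p) (\<lambda>a. \<Sum>n<k. D n q * v n a)"
    by (rule hip_cong) (auto simp: mA)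
  also have "\<dots> = (\<Sum>n<k. D n q * hip N (v p) (v n))" by (simp add: hip_sum_right hip_scale_right)
  also have "\<dots> = (\<Sum>n<k. if n = p then D n q else 0)" by (intro sum.cong refl) (auto simp: on p)
  also have "\<dots> = D p q" using sum.delta[of "{..<k}" p "\<lambda>n. D n q"] p by simp
  finally show ?thesis .
qed




lemma vec_facts:
  fixes k :: nat and v :: "nat \<Rightarrow> complex vec"
  assumes pos: "positive_op N T"
    and vc: "\<And>n. n < k \<Longrightarrow> v n \<in> carrier_vec N"
    and on: "\<And>n m. n < k \<Longrightarrow> m < k \<Longrightarrow> cinner (v n) (v m) = (if n = m then 1 else 0)"
    and eig: "\<And>n. n < k \<Longrightarrow> \<exists>ev. T *\<^sub>v v n = ev \<cdot>\<^sub>v v n"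
    and span: "cspan N k v = supp T"
  shows "\<And>n m. n < k \<Longrightarrow> m < k \<Longrightarrow> hip N (\<lambda>a. v n $ a) (\<lambda>a. v m $ a) = (if n = m then 1 else 0)"
    and "\<And>g. (\<forall>m<k. hip N (\<lambda>a. v m $ a) g = 0) \<Longrightarrow> \<forall>a<N. hmv N T g a = 0"
    and "\<exists>lam. (\<forall>n<k. 0 < lam n) \<and> (\<forall>n<k. \<forall>a<N. hmv N T (\<lambda>a. v n $ a) a = complex_of_real (lam n) * v n $ a)"
proof -
  have h: "hermitian N T" using pos by (rule pos_herm)
  have Tc: "T \<in> carrier_mat N N" using h by (rule hermitian_carrier)
  show on': "\<And>n m. n < k \<Longrightarrow> m < k \<Longrightarrow> hip N (\<lambda>a. v n $ a) (\<lambda>a. v m $ a) = (if n = m then 1 else 0)"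
    using on vc cinner_hip by metis
  have spanf: "\<And>f. \<exists>c. \<forall>a<N. hmv N T f a = (\<Sum>j<k. c j * (\<lambda>n a. v n $ a) j a)"
  proof -
    fix f :: "nat \<Rightarrow> complex"
    have x: "vec N f \<in> carrier_vec N" by simp
    have "T *\<^sub>v vec N f \<in> supp T" unfolding supp_def using Tc x by auto
    hence "T *\<^sub>v vec N f \<in> cspan N k v" using span by simp
    then obtain c where c: "T *\<^sub>v vec N f = vec N (\<lambda>a. \<Sum>j<k. c j * v j $ a)"
      unfolding cspan_def by auto
    show "\<exists>c. \<forall>a<N. hmv N T f a = (\<Sum>j<k. c j * (\<lambda>n a. v n $ a) j a)"
    proof (intro exI[of _ c] allI impI)
      fix a assume a: "a < N"
      have "hmv N T f a = hmv N T (\<lambda>b. vec N f $ b) a" by (rule hmv_cong) simp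
      also have "\<dots> = (T *\<^sub>v vec N f) $ a" using mult_mat_vec_hmv[OF Tc x a] by simp
      also have "\<dots> = (\<Sum>j<k. c j * v j $ a)" unfolding c using a by simp
      finally show "hmv N T f a = (\<Sum>j<k. c j * (\<lambda>n a. v n $ a) j a)" by simp
    qed
  qed
  show kill: "\<And>g. (\<forall>m<k. hip N (\<lambda>a. v m $ a) g = 0) \<Longrightarrow> \<forall>a<N. hmv N T g a = 0"
    using kill_orth[OF h spanf] by simp
  have "\<forall>n. \<exists>ev. n < k \<longrightarrow> (\<forall>a<N. hmv N T (\<lambda>a. v n $ a) a = ev * v n $ a) \<and> ev \<in> \<real> \<and> 0 < Re ev"
  proof (intro allI)
    fix n
    show "\<exists>ev. n < k \<longrightarrow> (\<forall>a<N. hmv N T (\<lambda>a. v n $ a) a = ev * v n $ a) \<and> ev \<in> \<real> \<and> 0 < Re ev"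
    proof (cases "n < k")
      case False thus ?thesis by auto
    next
      case n: True
      obtain ev where ev: "T *\<^sub>v v n = ev \<cdot>\<^sub>v v n" using eig[OF n] by blast
      have vn: "v n \<in> carrier_vec N" using vc[OF n] .
      have m: "\<forall>a<N. hmv N T (\<lambda>a. v n $ a) a = ev * v n $ a"
      proof (intro allI impI)
        fix a assume a: "a < N"
        have "hmv N T (\<lambda>a. v n $ a) a = (T *\<^sub>v v n) $ a" using mult_mat_vec_hmv[OF Tc vn a] by simp
        thus "hmv N T (\<lambda>a. v n $ a) a = ev * v n $ a" unfolding ev using a vn by simp
      qed
      have "hqf N T (\<lambda>a. v n $ a) = hip N (\<lambda>a. v n $ a) (\<lambda>a. ev * v n $ a)"
        unfolding hqf_def by (rule hip_cong) (use m in auto)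
      also have "\<dots> = ev" using on'[OF n n] by (simp add: hip_scale_right)
      finally have evq: "hqf N T (\<lambda>a. v n $ a) = ev" .
      have r: "ev \<in> \<real>" "0 \<le> Re ev" using pos evq unfolding positive_op_iff by metis+
      have "v n = vec N (\<lambda>a. \<Sum>j<k. (if j = n then 1 else 0) * v j $ a)"
      proof (rule eq_vecI)
        show "dim_vec (v n) = dim_vec (vec N (\<lambda>a. \<Sum>j<k. (if j = n then 1 else 0) * v j $ a))"
          using vn by simp
        fix a assume "a < dim_vec (vec N (\<lambda>a. \<Sum>j<k. (if j = n then 1 else 0) * v j $ a))"
        hence a: "a < N" by simp
        have "(\<Sum>j<k. (if j = n then 1 else 0) * v j $ a) = (\<Sum>j<k. if j = n then v j $ a else 0)"
          by (rule sum.cong) auto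
        also have "\<dots> = v n $ a" using sum.delta[of "{..<k}" n "\<lambda>j. v j $ a"] n by simp
        finally show "v n $ a = vec N (\<lambda>a. \<Sum>j<k. (if j = n then 1 else 0) * v j $ a) $ a"
          using a by simp
      qed
      hence "v n \<in> cspan N k v" unfolding cspan_def
        by (intro CollectI exI[of _ "\<lambda>j. if j = n then 1 else 0"]) simp
      hence "v n \<in> supp T" using span by simp
      then obtain x where x: "x \<in> carrier_vec N" "v n = T *\<^sub>v x" unfolding supp_def using Tc by auto
      have ne: "ev \<noteq> 0"
      proof
        assume e0: "ev = 0"
        have "hip N (\<lambda>a. v n $ a) (\<lambda>a. v n $ a) = hip N (hmv N T (\<lambda>a. x $ a)) (\<lambda>a. v n $ a)"
          by (rule hip_cong) (use x mult_mat_vec_hmv[OF Tc x(1)] in auto)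
        also have "\<dots> = hip N (\<lambda>a. x $ a) (hmv N T (\<lambda>a. v n $ a))" by (rule hermitian_hip[OF h, symmetric])
        also have "\<dots> = hip N (\<lambda>a. x $ a) (\<lambda>a. 0)" by (rule hip_cong) (use m e0 in auto)
        also have "\<dots> = 0" by (simp add: hip_def)
        finally show False using on'[OF n n] by simp
      qed
      have "0 < Re ev" using r ne real_re_zero by force
      thus ?thesis using m r by blast
    qed
  qed
  then obtain evf where evf: "\<And>n. n < k \<Longrightarrow> (\<forall>a<N. hmv N T (\<lambda>a. v n $ a) a = evf n * v n $ a) \<and> evf n \<in> \<real> \<and> 0 < Re (evf n)"
    by metis
  show "\<exists>lam. (\<forall>n<k. 0 < lam n) \<and> (\<forall>n<k. \<forall>a<N. hmv N T (\<lambda>a. v n $ a) a = complex_of_real (lam n) * v n $ a)"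
  proof (intro exI[of _ "\<lambda>n. Re (evf n)"] conjI allI impI)
    fix n assume n: "n < k"
    show "0 < Re (evf n)" using evf[OF n] by blast
    fix a assume a: "a < N"
    have "evf n = complex_of_real (Re (evf n))" using evf[OF n] by (metis Reals_cases Re_complex_of_real)
    thus "hmv N T (\<lambda>a. v n $ a) a = complex_of_real (Re (evf n)) * v n $ a" using evf[OF n] a by metis
  qed
qed




lemma herm_minus: assumes "hermitian n A" "hermitian n B" shows "hermitian n (A - B)"
proof -
  have c: "A \<in> carrier_mat n n" "B \<in> carrier_mat n n" using assms hermitian_carrier by auto
  show ?thesis unfolding hermitian_def
  proof (intro conjI allI impI)
    show "A - B \<in> carrier_mat n n" using c by (simp add: minus_carrier_mat)
    fix a b assume a: "a < n" and b: "b < n"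
    show "(A - B) $$ (a, b) = cnj ((A - B) $$ (b, a))"
      using a b c hermitianD'[OF assms(1) a b] hermitianD'[OF assms(2) a b] by simp
  qed
qed

lemma minus_entry: "A \<in> carrier_mat n n \<Longrightarrow> B \<in> carrier_mat n n \<Longrightarrow> a < n \<Longrightarrow> b < n \<Longrightarrow>
  (A - B) $$ (a, b) = A $$ (a, b) - B $$ (a, b)"
  by simp

lemma hmv_minus: assumes "A \<in> carrier_mat n n" "B \<in> carrier_mat n n" "a < n"
  shows "hmv n (A - B) g a = hmv n A g a - hmv n B g a"
  unfolding hmv_def using assms by (simp add: sum_subtractf[symmetric] left_diff_distrib)

lemma suff:
  fixes d2 d1 M L :: nat and T :: "nat \<Rightarrow> complex mat" and \<rho> :: "complex mat"
    and k :: "nat \<Rightarrow> nat" and v :: "nat \<Rightarrow> nat \<Rightarrow> complex vec" and \<sigma> :: "nat \<Rightarrow> complex mat"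
  assumes d2_pos: "0 < d2"
    and tester: "is_tester_with d2 d1 M T \<rho>"
    and v_carrier: "\<And>i n. i < M \<Longrightarrow> n < k i \<Longrightarrow> v i n \<in> carrier_vec (d2 * d1)"
    and v_orthonormal: "\<And>i n m. i < M \<Longrightarrow> n < k i \<Longrightarrow> m < k i \<Longrightarrow>
                          cinner (v i n) (v i m) = (if n = m then 1 else 0)"
    and v_eigen: "\<And>i n. i < M \<Longrightarrow> n < k i \<Longrightarrow> \<exists>ev. T i *\<^sub>v v i n = ev \<cdot>\<^sub>v v i n"
    and v_span: "\<And>i. i < M \<Longrightarrow> cspan (d2 * d1) (k i) (v i) = supp (T i)"
    and \<sigma>_herm: "\<And>l. l < L \<Longrightarrow> hermitian d1 (\<sigma> l)"
    and \<sigma>_spans: "\<And>X. hermitian d1 X \<Longrightarrow> mtrace X = 0 \<Longrightarrow> supp X \<subseteq> supp \<rho> \<Longrightarrow>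
          \<exists>c :: nat \<Rightarrow> real. X = mat d1 d1 (\<lambda>(a, b). \<Sum>l < L. complex_of_real (c l) * \<sigma> l $$ (a, b))"
    and triv: "\<And>(D :: nat \<Rightarrow> complex mat) (s :: nat \<Rightarrow> real).
        (\<forall>i<M. hermitian (k i) (D i)) \<Longrightarrow>
        (\<forall>a < d2 * d1. \<forall>b < d2 * d1.
           (\<Sum>i<M. \<Sum>n<k i. \<Sum>m<k i. D i $$ (n, m) * (v i n $ a) * cnj (v i m $ b))
           + (\<Sum>l < L. complex_of_real (s l) * kron (1\<^sub>m d2) (\<sigma> l) $$ (a, b)) = 0)
      \<Longrightarrow> (\<forall>i<M. D i = 0\<^sub>m (k i) (k i))"
  shows "extremal_tester d2 d1 M T"
  unfolding extremal_tester_def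
proof (intro conjI allI impI)
  let ?N = "d2 * d1"
  show "is_tester d2 d1 M T" unfolding is_tester_def using tester by blast
  fix T' T'' :: "nat \<Rightarrow> complex mat" and t :: real
  assume H: "is_tester d2 d1 M T' \<and> is_tester d2 d1 M T'' \<and> 0 < t \<and> t < 1 \<and>
        (\<forall>i<M. T i = complex_of_real t \<cdot>\<^sub>m T' i + complex_of_real (1 - t) \<cdot>\<^sub>m T'' i)"
  obtain \<rho>' where t1: "is_tester_with d2 d1 M T' \<rho>'" using H unfolding is_tester_def by blast
  obtain \<rho>'' where t2: "is_tester_with d2 d1 M T'' \<rho>''" using H unfolding is_tester_def by blast
  have t0: "0 < t" "t < 1" using H by auto
  have eqT: "\<And>i. i < M \<Longrightarrow> T i = complex_of_real t \<cdot>\<^sub>m T' i + complex_of_real (1 - t) \<cdot>\<^sub>m T'' i"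
    using H by auto
  have \<rho>h: "hermitian d1 \<rho>" using density_herm[OF tester_density[OF tester]] .
  have \<rho>'h: "hermitian d1 \<rho>'" using density_herm[OF tester_density[OF t1]] .
  have \<rho>c: "\<rho> \<in> carrier_mat d1 d1" using \<rho>h by (rule hermitian_carrier)
  have \<rho>'c: "\<rho>' \<in> carrier_mat d1 d1" using \<rho>'h by (rule hermitian_carrier)
  have Tp: "\<And>i. i < M \<Longrightarrow> positive_op ?N (T i)" using tester_pos[OF tester] .
  have T'p: "\<And>i. i < M \<Longrightarrow> positive_op ?N (T' i)" using tester_pos[OF t1] .
  have T''p: "\<And>i. i < M \<Longrightarrow> positive_op ?N (T'' i)" using tester_pos[OF t2] .
  have Tc: "\<And>i. i < M \<Longrightarrow> T i \<in> carrier_mat ?N ?N" using Tp pos_herm hermitian_carrier by blast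
  have T'c: "\<And>i. i < M \<Longrightarrow> T' i \<in> carrier_mat ?N ?N" using T'p pos_herm hermitian_carrier by blast
  have T''c: "\<And>i. i < M \<Longrightarrow> T'' i \<in> carrier_mat ?N ?N" using T''p pos_herm hermitian_carrier by blast
  have entry: "\<And>i a b. i < M \<Longrightarrow> a < ?N \<Longrightarrow> b < ?N \<Longrightarrow>
      T i $$ (a, b) = complex_of_real t * T' i $$ (a, b) + complex_of_real (1 - t) * T'' i $$ (a, b)"
  proof -
    fix i a b assume i: "i < M" and a: "a < ?N" and b: "b < ?N"
    have "T i $$ (a, b) = (complex_of_real t \<cdot>\<^sub>m T' i + complex_of_real (1 - t) \<cdot>\<^sub>m T'' i) $$ (a, b)"
      using eqT[OF i] by simp
    thus "T i $$ (a, b) = complex_of_real t * T' i $$ (a, b) + complex_of_real (1 - t) * T'' i $$ (a, b)"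
      using T'c[OF i] T''c[OF i] a b by simp
  qed
  have zeroT: "\<And>i g. i < M \<Longrightarrow> \<forall>a<?N. hmv ?N (T i) g a = 0 \<Longrightarrow> \<forall>a<?N. hmv ?N (T' i) g a = 0"
  proof -
    fix i g assume i: "i < M" and z: "\<forall>a<?N. hmv ?N (T i) g a = 0"
    have "hqf ?N (T i) g = 0" using hqf_zero_fn[OF z] .
    moreover have "hqf ?N (T i) g = complex_of_real t * hqf ?N (T' i) g + complex_of_real (1 - t) * hqf ?N (T'' i) g"
      by (rule hqf_lin) (rule entry[OF i])
    ultimately have "0 = t * Re (hqf ?N (T' i) g) + (1 - t) * Re (hqf ?N (T'' i) g)"
      by (metis Re_complex_of_real plus_complex.sel(1) times_complex.sel(1) zero_complex.sel(1)
          Im_complex_of_real mult_zero_left diff_zero)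
    moreover have "0 \<le> Re (hqf ?N (T' i) g)" "0 \<le> Re (hqf ?N (T'' i) g)" "hqf ?N (T' i) g \<in> \<real>"
      using T'p[OF i] T''p[OF i] unfolding positive_op_iff by auto
    ultimately have "Re (hqf ?N (T' i) g) = 0" using t0
      by (smt (verit, best) mult_nonneg_nonneg mult_pos_pos)
    hence "hqf ?N (T' i) g = 0" using \<open>hqf ?N (T' i) g \<in> \<real>\<close> real_re_zero by blast
    thus "\<forall>a<?N. hmv ?N (T' i) g a = 0" using psd_zero[OF T'p[OF i]] by blast
  qed
  define \<Delta> where "\<Delta> = (\<lambda>i. T' i - T i)"
  have \<Delta>e: "\<And>i a b. i < M \<Longrightarrow> a < ?N \<Longrightarrow> b < ?N \<Longrightarrow> \<Delta> i $$ (a, b) = T' i $$ (a, b) - T i $$ (a, b)"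
    unfolding \<Delta>_def using T'c Tc minus_entry by blast
  have \<Delta>h: "\<And>i. i < M \<Longrightarrow> hermitian ?N (\<Delta> i)"
    unfolding \<Delta>_def using T'p Tp pos_herm herm_minus by blast
  have on: "\<And>i n m. i < M \<Longrightarrow> n < k i \<Longrightarrow> m < k i \<Longrightarrow>
      hip ?N (($) (v i n)) (($) (v i m)) = (if n = m then 1 else 0)"
    using vec_facts(1)[OF Tp v_carrier v_orthonormal v_eigen v_span] by blast
  have killT: "\<And>i g. i < M \<Longrightarrow> (\<forall>m<k i. hip ?N (($) (v i m)) g = 0) \<Longrightarrow> \<forall>a<?N. hmv ?N (T i) g a = 0"
    using vec_facts(2)[OF Tp v_carrier v_orthonormal v_eigen v_span] by blast
  have kill\<Delta>: "\<And>i g. i < M \<Longrightarrow> (\<forall>m<k i. hip ?N (($) (v i m)) g = 0) \<Longrightarrow> \<forall>a<?N. hmv ?N (\<Delta> i) g a = 0"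
  proof -
    fix i g assume i: "i < M" and g: "\<forall>m<k i. hip ?N (($) (v i m)) g = 0"
    have 1: "\<forall>a<?N. hmv ?N (T i) g a = 0" using killT[OF i g] .
    have 2: "\<forall>a<?N. hmv ?N (T' i) g a = 0" using zeroT[OF i 1] .
    show "\<forall>a<?N. hmv ?N (\<Delta> i) g a = 0"
      unfolding \<Delta>_def using hmv_minus[OF T'c[OF i] Tc[OF i]] 1 2 by simp
  qed
  define D where "D = (\<lambda>i. mat (k i) (k i) (\<lambda>(n, m). hip ?N (($) (v i n)) (hmv ?N (\<Delta> i) (($) (v i m)))))"
  have rep\<Delta>: "\<And>i a b. i < M \<Longrightarrow> a < ?N \<Longrightarrow> b < ?N \<Longrightarrow>
      \<Delta> i $$ (a, b) = (\<Sum>n<k i. \<Sum>m<k i. D i $$ (n, m) * v i n $ a * cnj (v i m $ b))"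
  proof -
    fix i a b assume i: "i < M" and a: "a < ?N" and b: "b < ?N"
    have "\<Delta> i $$ (a, b) = (\<Sum>n<k i. \<Sum>m<k i. hip ?N (($) (v i n)) (hmv ?N (\<Delta> i) (($) (v i m))) * v i n $ a * cnj (v i m $ b))"
      using rep[where v="\<lambda>n. ($) (v i n)", OF \<Delta>h[OF i] on[OF i] kill\<Delta>[OF i] a b] by simp
    also have "\<dots> = (\<Sum>n<k i. \<Sum>m<k i. D i $$ (n, m) * v i n $ a * cnj (v i m $ b))"
      unfolding D_def by (intro sum.cong refl) simp
    finally show "\<Delta> i $$ (a, b) = (\<Sum>n<k i. \<Sum>m<k i. D i $$ (n, m) * v i n $ a * cnj (v i m $ b))" .
  qed
  have Dh: "\<forall>i<M. hermitian (k i) (D i)"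
  proof (intro allI impI)
    fix i assume i: "i < M"
    show "hermitian (k i) (D i)" unfolding hermitian_def
    proof (intro conjI allI impI)
      show "D i \<in> carrier_mat (k i) (k i)" unfolding D_def by simp
      fix n m assume n: "n < k i" and m: "m < k i"
      have "hip ?N (($) (v i n)) (hmv ?N (\<Delta> i) (($) (v i m))) = hip ?N (hmv ?N (\<Delta> i) (($) (v i n))) (($) (v i m))"
        by (rule hermitian_hip[OF \<Delta>h[OF i]])
      also have "\<dots> = cnj (hip ?N (($) (v i m)) (hmv ?N (\<Delta> i) (($) (v i n))))" by (rule hip_cnj)
      finally show "D i $$ (n, m) = cnj (D i $$ (m, n))" unfolding D_def using n m by simp
    qed
  qed
  have \<rho>p: "positive_op d1 \<rho>" using tester_density[OF tester] unfolding density_op_def by auto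
  have \<rho>'p: "positive_op d1 \<rho>'" using tester_density[OF t1] unfolding density_op_def by auto
  have qs: "\<And>u. hqf d1 \<rho> u = (\<Sum>i<M. hqf ?N (T i) (lift d1 u))"
    by (rule qf_lift_sum[OF d2_pos \<rho>c]) (rule tester_sum[OF tester])
  have qs': "\<And>u. hqf d1 \<rho>' u = (\<Sum>i<M. hqf ?N (T' i) (lift d1 u))"
    by (rule qf_lift_sum[OF d2_pos \<rho>'c]) (rule tester_sum[OF t1])
  have rho_kill: "\<And>u. \<forall>a<d1. hmv d1 \<rho> u a = 0 \<Longrightarrow> \<forall>a<d1. hmv d1 \<rho>' u a = 0"
  proof -
    fix u assume u: "\<forall>a<d1. hmv d1 \<rho> u a = 0"
    have s0: "(\<Sum>i<M. hqf ?N (T i) (lift d1 u)) = 0" using hqf_zero_fn[OF u] qs by simp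
    have z: "\<And>i. i < M \<Longrightarrow> hqf ?N (T i) (lift d1 u) = 0"
    proof -
      fix i assume i: "i < M"
      show "hqf ?N (T i) (lift d1 u) = 0"
        by (rule real_nonneg_sum_zero[where I="{..<M}" and z="\<lambda>i. hqf ?N (T i) (lift d1 u)"])
           (use Tp s0 i in \<open>auto simp: positive_op_iff\<close>)
    qed
    have "\<And>i. i < M \<Longrightarrow> hqf ?N (T' i) (lift d1 u) = 0"
      using zeroT psd_zero[OF Tp z] hqf_zero_fn by blast
    hence "hqf d1 \<rho>' u = 0" using qs' by simp
    thus "\<forall>a<d1. hmv d1 \<rho>' u a = 0" using psd_zero[OF \<rho>'p] by blast
  qed
  define X where "X = \<rho>' - \<rho>"
  have Xh: "hermitian d1 X" unfolding X_def by (rule herm_minus[OF \<rho>'h \<rho>h])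
  have Xc: "X \<in> carrier_mat d1 d1" using Xh by (rule hermitian_carrier)
  have Xe: "\<And>a b. a < d1 \<Longrightarrow> b < d1 \<Longrightarrow> X $$ (a, b) = \<rho>' $$ (a, b) - \<rho> $$ (a, b)"
    unfolding X_def using \<rho>c by simp
  have Xtr: "mtrace X = 0"
  proof -
    have "mtrace X = (\<Sum>a<d1. \<rho>' $$ (a, a) - \<rho> $$ (a, a))"
      unfolding mtrace_def using Xc Xe by (intro sum.cong) auto
    also have "\<dots> = mtrace \<rho>' - mtrace \<rho>" unfolding mtrace_def using \<rho>c \<rho>'c by (simp add: sum_subtractf)
    also have "\<dots> = 0" using tester_density[OF t1] tester_density[OF tester] unfolding density_op_def by simp
    finally show ?thesis .
  qed
  have Xsupp: "supp X \<subseteq> supp \<rho>"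
  proof
    fix y assume "y \<in> supp X"
    then obtain z where z: "z \<in> carrier_vec d1" "y = X *\<^sub>v z" unfolding supp_def using Xc by auto
    have "\<exists>x. \<forall>a<d1. hmv d1 X (($) z) a = hmv d1 \<rho> x a"
    proof (rule range_herm[OF \<rho>h])
      fix u assume u: "\<forall>a<d1. hmv d1 \<rho> u a = 0"
      have u': "\<forall>a<d1. hmv d1 \<rho>' u a = 0" using rho_kill[OF u] .
      have "hip d1 u (hmv d1 X (($) z)) = hip d1 (hmv d1 X u) (($) z)" by (rule hermitian_hip[OF Xh])
      also have "\<dots> = hip d1 (\<lambda>_. 0) (($) z)"
        by (rule hip_cong) (use u u' hmv_minus[OF \<rho>'c \<rho>c] in \<open>auto simp: X_def\<close>)
      also have "\<dots> = 0" by (simp add: hip_def)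
      finally show "hip d1 u (hmv d1 X (($) z)) = 0" .
    qed
    then obtain x where x: "\<forall>a<d1. hmv d1 X (($) z) a = hmv d1 \<rho> x a" by blast
    have "y = \<rho> *\<^sub>v vec d1 x"
    proof (rule eq_vecI)
      show "dim_vec y = dim_vec (\<rho> *\<^sub>v vec d1 x)" using z Xc \<rho>c by simp
      fix a assume "a < dim_vec (\<rho> *\<^sub>v vec d1 x)"
      hence a: "a < d1" using \<rho>c by simp
      have "y $ a = hmv d1 X (($) z) a" using z mult_mat_vec_hmv[OF Xc z(1) a] by simp
      also have "\<dots> = hmv d1 \<rho> x a" using x a by simp
      also have "\<dots> = hmv d1 \<rho> (($) (vec d1 x)) a" by (rule hmv_cong) simp
      also have "\<dots> = (\<rho> *\<^sub>v vec d1 x) $ a" using mult_mat_vec_hmv[OF \<rho>c _ a, of "vec d1 x"] by simp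
      finally show "y $ a = (\<rho> *\<^sub>v vec d1 x) $ a" .
    qed
    thus "y \<in> supp \<rho>" unfolding supp_def using \<rho>c by auto
  qed
  obtain c where c: "X = mat d1 d1 (\<lambda>(a, b). \<Sum>l < L. complex_of_real (c l) * \<sigma> l $$ (a, b))"
    using \<sigma>_spans[OF Xh Xtr Xsupp] by blast
  have \<sigma>c: "\<And>l. l < L \<Longrightarrow> \<sigma> l \<in> carrier_mat d1 d1" using \<sigma>_herm hermitian_carrier by blast
  have eqn: "\<forall>a < ?N. \<forall>b < ?N.
           (\<Sum>i<M. \<Sum>n<k i. \<Sum>m<k i. D i $$ (n, m) * (v i n $ a) * cnj (v i m $ b))
           + (\<Sum>l < L. complex_of_real (- c l) * kron (1\<^sub>m d2) (\<sigma> l) $$ (a, b)) = 0"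
  proof (intro allI impI)
    fix a b assume a: "a < ?N" and b: "b < ?N"
    have d1p: "0 < d1" using a by (cases d1) auto
    have am: "a mod d1 < d1" "b mod d1 < d1" using d1p by auto
    have "(\<Sum>i<M. \<Sum>n<k i. \<Sum>m<k i. D i $$ (n, m) * (v i n $ a) * cnj (v i m $ b)) = (\<Sum>i<M. \<Delta> i $$ (a, b))"
      using rep\<Delta> a b by simp
    also have "\<dots> = (\<Sum>i<M. T' i $$ (a, b)) - (\<Sum>i<M. T i $$ (a, b))"
      using \<Delta>e a b by (simp add: sum_subtractf)
    also have "\<dots> = kron (1\<^sub>m d2) \<rho>' $$ (a, b) - kron (1\<^sub>m d2) \<rho> $$ (a, b)"
      using tester_sum[OF t1 a b] tester_sum[OF tester a b] by simp
    also have "\<dots> = (if a div d1 = b div d1 then X $$ (a mod d1, b mod d1) else 0)"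
      using kron_one_entry[OF \<rho>c a b] kron_one_entry[OF \<rho>'c a b] Xe[OF am] by simp
    also have "\<dots> = (\<Sum>l < L. complex_of_real (c l) * kron (1\<^sub>m d2) (\<sigma> l) $$ (a, b))"
      unfolding c using am kron_one_entry[OF \<sigma>c a b] by (auto intro!: sum.cong)
    finally show "(\<Sum>i<M. \<Sum>n<k i. \<Sum>m<k i. D i $$ (n, m) * (v i n $ a) * cnj (v i m $ b))
           + (\<Sum>l < L. complex_of_real (- c l) * kron (1\<^sub>m d2) (\<sigma> l) $$ (a, b)) = 0"
      by (simp add: sum_negf)
  qed
  have D0: "\<forall>i<M. D i = 0\<^sub>m (k i) (k i)" using triv[OF Dh eqn] .
  fix i assume i: "i < M"
  {
    have "\<And>n m. n < k i \<Longrightarrow> m < k i \<Longrightarrow> D i $$ (n, m) = 0" using D0 i by simp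
    hence \<Delta>0: "\<And>a b. a < ?N \<Longrightarrow> b < ?N \<Longrightarrow> \<Delta> i $$ (a, b) = 0" using rep\<Delta>[OF i] by simp
    show "T' i = T'' i"
    proof (rule eq_matI)
      fix a b assume "a < dim_row (T'' i)" "b < dim_col (T'' i)"
      hence a: "a < ?N" and b: "b < ?N" using T''c[OF i] by auto
      have 1: "T' i $$ (a, b) = T i $$ (a, b)" using \<Delta>0[OF a b] \<Delta>e[OF i a b] by simp
      have "complex_of_real (1 - t) * T'' i $$ (a, b) = complex_of_real (1 - t) * T i $$ (a, b)"
        using entry[OF i a b] 1 by (simp add: algebra_simps)
      moreover have "complex_of_real (1 - t) \<noteq> 0" using t0 by simp
      ultimately show "T' i $$ (a, b) = T'' i $$ (a, b)" using 1 by simp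
    qed (use T'c[OF i] T''c[OF i] in auto)
  }
qed




lemma nec:
  fixes d2 d1 M L :: nat and T :: "nat \<Rightarrow> complex mat" and \<rho> :: "complex mat"
    and k :: "nat \<Rightarrow> nat" and v :: "nat \<Rightarrow> nat \<Rightarrow> complex vec" and \<sigma> :: "nat \<Rightarrow> complex mat"
    and D :: "nat \<Rightarrow> complex mat" and s :: "nat \<Rightarrow> real"
  assumes d2_pos: "0 < d2"
    and tester: "is_tester_with d2 d1 M T \<rho>"
    and v_carrier: "\<And>i n. i < M \<Longrightarrow> n < k i \<Longrightarrow> v i n \<in> carrier_vec (d2 * d1)"
    and v_orthonormal: "\<And>i n m. i < M \<Longrightarrow> n < k i \<Longrightarrow> m < k i \<Longrightarrow>
                          cinner (v i n) (v i m) = (if n = m then 1 else 0)"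
    and v_eigen: "\<And>i n. i < M \<Longrightarrow> n < k i \<Longrightarrow> \<exists>ev. T i *\<^sub>v v i n = ev \<cdot>\<^sub>v v i n"
    and v_span: "\<And>i. i < M \<Longrightarrow> cspan (d2 * d1) (k i) (v i) = supp (T i)"
    and \<sigma>_herm: "\<And>l. l < L \<Longrightarrow> hermitian d1 (\<sigma> l)"
    and \<sigma>_traceless: "\<And>l. l < L \<Longrightarrow> mtrace (\<sigma> l) = 0"
    and \<sigma>_indep: "\<And>c :: nat \<Rightarrow> real.
          mat d1 d1 (\<lambda>(a, b). \<Sum>l < L. complex_of_real (c l) * \<sigma> l $$ (a, b)) = 0\<^sub>m d1 d1
          \<Longrightarrow> \<forall>l < L. c l = 0"
    and ext: "extremal_tester d2 d1 M T"
    and Dh: "\<forall>i<M. hermitian (k i) (D i)"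
    and E: "\<forall>a < d2 * d1. \<forall>b < d2 * d1.
           (\<Sum>i<M. \<Sum>n<k i. \<Sum>m<k i. D i $$ (n, m) * (v i n $ a) * cnj (v i m $ b))
           + (\<Sum>l < L. complex_of_real (s l) * kron (1\<^sub>m d2) (\<sigma> l) $$ (a, b)) = 0"
  shows "(\<forall>i<M. D i = 0\<^sub>m (k i) (k i)) \<and> (\<forall>l < L. s l = 0)"
proof -
  let ?N = "d2 * d1"
  have \<rho>h: "hermitian d1 \<rho>" using density_herm[OF tester_density[OF tester]] .
  have \<rho>c: "\<rho> \<in> carrier_mat d1 d1" using \<rho>h by (rule hermitian_carrier)
  have Tp: "\<And>i. i < M \<Longrightarrow> positive_op ?N (T i)" using tester_pos[OF tester] .
  have Th: "\<And>i. i < M \<Longrightarrow> hermitian ?N (T i)" using Tp pos_herm by blast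
  have Tc: "\<And>i. i < M \<Longrightarrow> T i \<in> carrier_mat ?N ?N" using Th hermitian_carrier by blast
  have \<sigma>c: "\<And>l. l < L \<Longrightarrow> \<sigma> l \<in> carrier_mat d1 d1" using \<sigma>_herm hermitian_carrier by blast
  have on: "\<And>i n m. i < M \<Longrightarrow> n < k i \<Longrightarrow> m < k i \<Longrightarrow>
      hip ?N (($) (v i n)) (($) (v i m)) = (if n = m then 1 else 0)"
    using vec_facts(1)[OF Tp v_carrier v_orthonormal v_eigen v_span] by blast
  have killT: "\<And>i g. i < M \<Longrightarrow> (\<forall>m<k i. hip ?N (($) (v i m)) g = 0) \<Longrightarrow> \<forall>a<?N. hmv ?N (T i) g a = 0"
    using vec_facts(2)[OF Tp v_carrier v_orthonormal v_eigen v_span] by blast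
  have "\<forall>i. \<exists>lam. i < M \<longrightarrow> (\<forall>n<k i. 0 < lam n) \<and> (\<forall>n<k i. \<forall>a<?N. hmv ?N (T i) (($) (v i n)) a = complex_of_real (lam n) * v i n $ a)"
    using vec_facts(3)[OF Tp v_carrier v_orthonormal v_eigen v_span] by blast
  then obtain lam where lam: "\<And>i. i < M \<Longrightarrow> (\<forall>n<k i. 0 < lam i n) \<and> (\<forall>n<k i. \<forall>a<?N. hmv ?N (T i) (($) (v i n)) a = complex_of_real (lam i n) * v i n $ a)"
    by metis
  define \<Delta> where "\<Delta> = (\<lambda>i. mat ?N ?N (\<lambda>(a, b). \<Sum>n<k i. \<Sum>m<k i. D i $$ (n, m) * v i n $ a * cnj (v i m $ b)))"
  have \<Delta>c: "\<And>i. \<Delta> i \<in> carrier_mat ?N ?N" unfolding \<Delta>_def by simp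
  have \<Delta>e: "\<And>i a b. a < ?N \<Longrightarrow> b < ?N \<Longrightarrow> \<Delta> i $$ (a, b) = (\<Sum>n<k i. \<Sum>m<k i. D i $$ (n, m) * v i n $ a * cnj (v i m $ b))"
    unfolding \<Delta>_def by simp
  have \<Delta>h: "\<And>i. i < M \<Longrightarrow> hermitian ?N (\<Delta> i)"
  proof -
    fix i assume i: "i < M"
    have Dhi: "hermitian (k i) (D i)" using Dh i by blast
    show "hermitian ?N (\<Delta> i)" unfolding hermitian_def
    proof (intro conjI allI impI \<Delta>c)
      fix a b assume a: "a < ?N" and b: "b < ?N"
      have "cnj (\<Delta> i $$ (b, a)) = (\<Sum>n<k i. \<Sum>m<k i. cnj (D i $$ (n, m)) * cnj (v i n $ b) * v i m $ a)"
        unfolding \<Delta>e[OF b a] by (simp add: cnj_sum)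
      also have "\<dots> = (\<Sum>n<k i. \<Sum>m<k i. D i $$ (m, n) * v i m $ a * cnj (v i n $ b))"
        by (intro sum.cong refl) (simp add: hermitianD'[OF Dhi])
      also have "\<dots> = (\<Sum>m<k i. \<Sum>n<k i. D i $$ (m, n) * v i m $ a * cnj (v i n $ b))"
        by (rule sum.swap)
      also have "\<dots> = \<Delta> i $$ (a, b)" unfolding \<Delta>e[OF a b] ..
      finally show "\<Delta> i $$ (a, b) = cnj (\<Delta> i $$ (b, a))" by simp
    qed
  qed
  have "\<forall>i. \<exists>\<epsilon>. i < M \<longrightarrow> 0 < \<epsilon> \<and> (\<forall>f. \<epsilon> * \<bar>Re (hqf ?N (\<Delta> i) f)\<bar> \<le> Re (hqf ?N (T i) f))"
  proof (intro allI)
    fix i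
    show "\<exists>\<epsilon>. i < M \<longrightarrow> 0 < \<epsilon> \<and> (\<forall>f. \<epsilon> * \<bar>Re (hqf ?N (\<Delta> i) f)\<bar> \<le> Re (hqf ?N (T i) f))"
    proof (cases "i < M")
      case False thus ?thesis by auto
    next
      case i: True
      have "\<exists>\<epsilon>>0. \<forall>f. \<epsilon> * \<bar>Re (hqf ?N (\<Delta> i) f)\<bar> \<le> Re (hqf ?N (T i) f)"
        by (rule pos_bound[where v="\<lambda>n. ($) (v i n)" and k="k i" and lam="lam i" and D="\<lambda>n m. D i $$ (n, m)",
              OF on[OF i] killT[OF i]]) (use lam[OF i] \<Delta>e in auto)
      thus ?thesis by blast
    qed
  qed
  then obtain Ef where Ef: "\<And>i. i < M \<Longrightarrow> 0 < Ef i \<and> (\<forall>f. Ef i * \<bar>Re (hqf ?N (\<Delta> i) f)\<bar> \<le> Re (hqf ?N (T i) f))"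
    by metis
  define \<epsilon> where "\<epsilon> = Min (insert 1 (Ef ` {..<M}))"
  have \<epsilon>pos: "0 < \<epsilon>" unfolding \<epsilon>_def using Ef by (subst Min_gr_iff) auto
  have \<epsilon>le: "\<And>i. i < M \<Longrightarrow> \<epsilon> \<le> Ef i" unfolding \<epsilon>_def by (intro Min_le) auto
  define \<tau> where "\<tau> = mat d1 d1 (\<lambda>(a, b). \<Sum>l<L. complex_of_real (s l) * \<sigma> l $$ (a, b))"
  have \<tau>c: "\<tau> \<in> carrier_mat d1 d1" unfolding \<tau>_def by simp
  have \<tau>e: "\<And>a b. a < d1 \<Longrightarrow> b < d1 \<Longrightarrow> \<tau> $$ (a, b) = (\<Sum>l<L. complex_of_real (s l) * \<sigma> l $$ (a, b))"
    unfolding \<tau>_def by simp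
  have \<tau>h: "hermitian d1 \<tau>" unfolding hermitian_def
  proof (intro conjI allI impI \<tau>c)
    fix a b assume a: "a < d1" and b: "b < d1"
    have "cnj (\<tau> $$ (b, a)) = (\<Sum>l<L. complex_of_real (s l) * cnj (\<sigma> l $$ (b, a)))"
      unfolding \<tau>e[OF b a] by (simp add: cnj_sum)
    also have "\<dots> = \<tau> $$ (a, b)" unfolding \<tau>e[OF a b]
    proof (intro sum.cong refl)
      fix l assume "l \<in> {..<L}"
      thus "complex_of_real (s l) * cnj (\<sigma> l $$ (b, a)) = complex_of_real (s l) * \<sigma> l $$ (a, b)"
        using hermitianD'[OF \<sigma>_herm a b, of l] by simp
    qed
    finally show "\<tau> $$ (a, b) = cnj (\<tau> $$ (b, a))" by simp
  qed
  have \<tau>tr: "(\<Sum>a<d1. \<tau> $$ (a, a)) = 0"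
  proof -
    have "(\<Sum>a<d1. \<tau> $$ (a, a)) = (\<Sum>l<L. complex_of_real (s l) * (\<Sum>a<d1. \<sigma> l $$ (a, a)))"
      by (simp add: \<tau>e sum_distrib_left sum.swap[of _ "{..<d1}"])
    also have "\<dots> = (\<Sum>l<L. complex_of_real (s l) * mtrace (\<sigma> l))"
      unfolding mtrace_def using \<sigma>c by (intro sum.cong refl) auto
    also have "\<dots> = 0" using \<sigma>_traceless by simp
    finally show ?thesis .
  qed
  have kron\<tau>: "\<And>a b. a < ?N \<Longrightarrow> b < ?N \<Longrightarrow> kron (1\<^sub>m d2) \<tau> $$ (a, b) = (\<Sum>l < L. complex_of_real (s l) * kron (1\<^sub>m d2) (\<sigma> l) $$ (a, b))"
  proof -
    fix a b assume a: "a < ?N" and b: "b < ?N"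
    have d1p: "0 < d1" using a by (cases d1) auto
    have am: "a mod d1 < d1" "b mod d1 < d1" using d1p by auto
    show "kron (1\<^sub>m d2) \<tau> $$ (a, b) = (\<Sum>l < L. complex_of_real (s l) * kron (1\<^sub>m d2) (\<sigma> l) $$ (a, b))"
      unfolding kron_one_entry[OF \<tau>c a b] using am kron_one_entry[OF \<sigma>c a b] \<tau>e[OF am]
      by (auto intro!: sum.cong)
  qed
  have Ekron: "\<And>a b. a < ?N \<Longrightarrow> b < ?N \<Longrightarrow> (\<Sum>i<M. \<Delta> i $$ (a, b)) = - kron (1\<^sub>m d2) \<tau> $$ (a, b)"
  proof -
    fix a b assume a: "a < ?N" and b: "b < ?N"
    have "(\<Sum>i<M. \<Delta> i $$ (a, b)) = (\<Sum>i<M. \<Sum>n<k i. \<Sum>m<k i. D i $$ (n, m) * (v i n $ a) * cnj (v i m $ b))"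
      using \<Delta>e[OF a b] by simp
    thus "(\<Sum>i<M. \<Delta> i $$ (a, b)) = - kron (1\<^sub>m d2) \<tau> $$ (a, b)"
      using E a b kron\<tau>[OF a b] by (simp add: eq_neg_iff_add_eq_0)
  qed
  define Te where "Te = (\<lambda>(e::real) i. mat ?N ?N (\<lambda>(a, b). T i $$ (a, b) + complex_of_real e * \<Delta> i $$ (a, b)))"
  define \<rho>e where "\<rho>e = (\<lambda>e::real. mat d1 d1 (\<lambda>(a, b). \<rho> $$ (a, b) - complex_of_real e * \<tau> $$ (a, b)))"
  have Tee: "\<And>e i a b. a < ?N \<Longrightarrow> b < ?N \<Longrightarrow> Te e i $$ (a, b) = T i $$ (a, b) + complex_of_real e * \<Delta> i $$ (a, b)"
    unfolding Te_def by simp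
  have Tec: "\<And>e i. Te e i \<in> carrier_mat ?N ?N" unfolding Te_def by simp
  have \<rho>ec: "\<And>e. \<rho>e e \<in> carrier_mat d1 d1" unfolding \<rho>e_def by simp
  have \<rho>ee: "\<And>e a b. a < d1 \<Longrightarrow> b < d1 \<Longrightarrow> \<rho>e e $$ (a, b) = \<rho> $$ (a, b) - complex_of_real e * \<tau> $$ (a, b)"
    unfolding \<rho>e_def by simp
  have tst: "\<And>e. \<bar>e\<bar> \<le> \<epsilon> \<Longrightarrow> is_tester_with d2 d1 M (Te e) (\<rho>e e)"
  proof -
    fix e :: real assume e: "\<bar>e\<bar> \<le> \<epsilon>"
    have Teh: "\<And>i. i < M \<Longrightarrow> hermitian ?N (Te e i)" unfolding hermitian_def
    proof (intro conjI allI impI Tec)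
      fix i a b assume i: "i < M" and a: "a < ?N" and b: "b < ?N"
      show "Te e i $$ (a, b) = cnj (Te e i $$ (b, a))"
        unfolding Tee[OF a b] Tee[OF b a] using hermitianD'[OF Th[OF i] a b] hermitianD'[OF \<Delta>h[OF i] a b] by simp
    qed
    have Tep: "\<And>i. i < M \<Longrightarrow> positive_op ?N (Te e i)"
    proof -
      fix i assume i: "i < M"
      show "positive_op ?N (Te e i)" unfolding positive_op_iff
      proof (intro conjI allI Teh[OF i] hermitian_hqf_real)
        fix f
        have "hqf ?N (Te e i) f = 1 * hqf ?N (T i) f + complex_of_real e * hqf ?N (\<Delta> i) f"
          by (rule hqf_lin) (simp add: Tee)
        hence r: "Re (hqf ?N (Te e i) f) = Re (hqf ?N (T i) f) + e * Re (hqf ?N (\<Delta> i) f)" by simp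
        have "- (e * Re (hqf ?N (\<Delta> i) f)) \<le> \<bar>e\<bar> * \<bar>Re (hqf ?N (\<Delta> i) f)\<bar>"
          by (metis abs_ge_minus_self abs_mult)
        also have "\<dots> \<le> Ef i * \<bar>Re (hqf ?N (\<Delta> i) f)\<bar>"
          using e \<epsilon>le[OF i] by (intro mult_right_mono) auto
        also have "\<dots> \<le> Re (hqf ?N (T i) f)" using Ef[OF i] by blast
        finally show "0 \<le> Re (hqf ?N (Te e i) f)" using r by linarith
      qed
    qed
    have sumE: "\<And>a b. a < ?N \<Longrightarrow> b < ?N \<Longrightarrow> (\<Sum>i<M. Te e i $$ (a, b)) = kron (1\<^sub>m d2) (\<rho>e e) $$ (a, b)"
    proof -
      fix a b assume a: "a < ?N" and b: "b < ?N"
      have d1p: "0 < d1" using a by (cases d1) auto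
      have am: "a mod d1 < d1" "b mod d1 < d1" using d1p by auto
      have "(\<Sum>i<M. Te e i $$ (a, b)) = (\<Sum>i<M. T i $$ (a, b)) + complex_of_real e * (\<Sum>i<M. \<Delta> i $$ (a, b))"
        using Tee[OF a b] by (simp add: sum.distrib sum_distrib_left)
      also have "\<dots> = kron (1\<^sub>m d2) \<rho> $$ (a, b) - complex_of_real e * kron (1\<^sub>m d2) \<tau> $$ (a, b)"
        using tester_sum[OF tester a b] Ekron[OF a b] by simp
      also have "\<dots> = kron (1\<^sub>m d2) (\<rho>e e) $$ (a, b)"
        unfolding kron_one_entry[OF \<rho>c a b] kron_one_entry[OF \<tau>c a b] kron_one_entry[OF \<rho>ec a b]
        using \<rho>ee[OF am] by simp
      finally show "(\<Sum>i<M. Te e i $$ (a, b)) = kron (1\<^sub>m d2) (\<rho>e e) $$ (a, b)" .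
    qed
    have \<rho>eh: "hermitian d1 (\<rho>e e)" unfolding hermitian_def
    proof (intro conjI allI impI \<rho>ec)
      fix a b assume a: "a < d1" and b: "b < d1"
      show "\<rho>e e $$ (a, b) = cnj (\<rho>e e $$ (b, a))"
        unfolding \<rho>ee[OF a b] \<rho>ee[OF b a] using hermitianD'[OF \<rho>h a b] hermitianD'[OF \<tau>h a b] by simp
    qed
    have \<rho>ep: "positive_op d1 (\<rho>e e)" unfolding positive_op_iff
    proof (intro conjI allI \<rho>eh)
      fix u
      have q: "hqf d1 (\<rho>e e) u = (\<Sum>i<M. hqf ?N (Te e i) (lift d1 u))"
        by (rule qf_lift_sum[OF d2_pos \<rho>ec]) (rule sumE)
      have each: "\<And>i. i \<in> {..<M} \<Longrightarrow> hqf ?N (Te e i) (lift d1 u) \<in> \<real> \<and> 0 \<le> Re (hqf ?N (Te e i) (lift d1 u))"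
        using Tep unfolding positive_op_iff by auto
      show "hqf d1 (\<rho>e e) u \<in> \<real>" unfolding q using each by (intro sum_in_Reals) auto
      show "0 \<le> Re (hqf d1 (\<rho>e e) u)" unfolding q Re_sum using each by (intro sum_nonneg) auto
    qed
    have tr: "mtrace (\<rho>e e) = 1"
    proof -
      have "mtrace (\<rho>e e) = (\<Sum>a<d1. \<rho> $$ (a, a) - complex_of_real e * \<tau> $$ (a, a))"
        unfolding mtrace_def using \<rho>ec \<rho>ee by (intro sum.cong) auto
      also have "\<dots> = mtrace \<rho> - complex_of_real e * (\<Sum>a<d1. \<tau> $$ (a, a))"
        unfolding mtrace_def using \<rho>c by (simp add: sum_subtractf sum_distrib_left)
      also have "\<dots> = 1" using \<tau>tr tester_density[OF tester] unfolding density_op_def by simp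
      finally show ?thesis .
    qed
    show "is_tester_with d2 d1 M (Te e) (\<rho>e e)" unfolding is_tester_with_def
    proof (intro conjI allI impI Tep)
      show "density_op d1 (\<rho>e e)" unfolding density_op_def using \<rho>ep tr by auto
      show "mat ?N ?N (\<lambda>(a, b). \<Sum>i<M. Te e i $$ (a, b)) = kron (1\<^sub>m d2) (\<rho>e e)"
      proof (rule eq_matI)
        fix a b assume "a < dim_row (kron (1\<^sub>m d2) (\<rho>e e))" "b < dim_col (kron (1\<^sub>m d2) (\<rho>e e))"
        hence a: "a < ?N" and b: "b < ?N" using kron_one_carrier[OF \<rho>ec[of e], of d2] by auto
        show "mat ?N ?N (\<lambda>(a, b). \<Sum>i<M. Te e i $$ (a, b)) $$ (a, b) = kron (1\<^sub>m d2) (\<rho>e e) $$ (a, b)"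
          using sumE[OF a b] a b by simp
      qed (use kron_one_carrier[OF \<rho>ec[of e], of d2] in auto)
    qed
  qed
  have t1: "is_tester d2 d1 M (Te \<epsilon>)" unfolding is_tester_def using tst[of \<epsilon>] \<epsilon>pos by auto
  have t2: "is_tester d2 d1 M (Te (- \<epsilon>))" unfolding is_tester_def using tst[of "- \<epsilon>"] \<epsilon>pos by auto
  have half: "\<forall>i<M. T i = complex_of_real (1/2) \<cdot>\<^sub>m Te \<epsilon> i + complex_of_real (1 - 1/2) \<cdot>\<^sub>m Te (- \<epsilon>) i"
  proof (intro allI impI)
    fix i assume i: "i < M"
    show "T i = complex_of_real (1/2) \<cdot>\<^sub>m Te \<epsilon> i + complex_of_real (1 - 1/2) \<cdot>\<^sub>m Te (- \<epsilon>) i"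
    proof (rule eq_matI)
      fix a b assume "a < dim_row (complex_of_real (1/2) \<cdot>\<^sub>m Te \<epsilon> i + complex_of_real (1 - 1/2) \<cdot>\<^sub>m Te (- \<epsilon>) i)"
        "b < dim_col (complex_of_real (1/2) \<cdot>\<^sub>m Te \<epsilon> i + complex_of_real (1 - 1/2) \<cdot>\<^sub>m Te (- \<epsilon>) i)"
      hence a: "a < ?N" and b: "b < ?N" using Tec[of "- \<epsilon>" i] by auto
      show "T i $$ (a, b) = (complex_of_real (1/2) \<cdot>\<^sub>m Te \<epsilon> i + complex_of_real (1 - 1/2) \<cdot>\<^sub>m Te (- \<epsilon>) i) $$ (a, b)"
        using a b Tec[of "- \<epsilon>" i] Tec[of \<epsilon> i] Tee[OF a b] by (simp add: algebra_simps)
    qed (use Tec[of "- \<epsilon>" i] Tec[of \<epsilon> i] Tc[OF i] in auto)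
  qed
  have pre: "is_tester d2 d1 M (Te \<epsilon>) \<and> is_tester d2 d1 M (Te (- \<epsilon>)) \<and> 0 < (1/2::real) \<and> (1/2::real) < 1 \<and>
     (\<forall>i<M. T i = complex_of_real (1/2) \<cdot>\<^sub>m Te \<epsilon> i + complex_of_real (1 - 1/2) \<cdot>\<^sub>m Te (- \<epsilon>) i)"
    by (intro conjI t1 t2 half) simp_all
  have ext': "\<forall>T' T'' (t::real). is_tester d2 d1 M T' \<and> is_tester d2 d1 M T'' \<and> 0 < t \<and> t < 1 \<and>
        (\<forall>i<M. T i = complex_of_real t \<cdot>\<^sub>m T' i + complex_of_real (1 - t) \<cdot>\<^sub>m T'' i)
        \<longrightarrow> (\<forall>i<M. T' i = T'' i)"
    using ext unfolding extremal_tester_def by (rule conjunct2)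
  have eqe: "\<forall>i<M. Te \<epsilon> i = Te (- \<epsilon>) i"
    using ext'[rule_format, OF pre] by blast
  have \<Delta>0: "\<And>i a b. i < M \<Longrightarrow> a < ?N \<Longrightarrow> b < ?N \<Longrightarrow> \<Delta> i $$ (a, b) = 0"
  proof -
    fix i a b assume i: "i < M" and a: "a < ?N" and b: "b < ?N"
    have "Te \<epsilon> i $$ (a, b) = Te (- \<epsilon>) i $$ (a, b)" using eqe i by simp
    hence "complex_of_real (2 * \<epsilon>) * \<Delta> i $$ (a, b) = 0" unfolding Tee[OF a b] by (simp add: algebra_simps)
    thus "\<Delta> i $$ (a, b) = 0" using \<epsilon>pos by simp
  qed
  have D0: "\<forall>i<M. D i = 0\<^sub>m (k i) (k i)"
  proof (intro allI impI)
    fix i assume i: "i < M"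
    have Dc: "D i \<in> carrier_mat (k i) (k i)" using Dh i hermitian_carrier by blast
    show "D i = 0\<^sub>m (k i) (k i)"
    proof (rule eq_matI)
      fix p q assume "p < dim_row (0\<^sub>m (k i) (k i))" "q < dim_col (0\<^sub>m (k i) (k i))"
      hence p: "p < k i" and q: "q < k i" by auto
      have "D i $$ (p, q) = hip ?N (($) (v i p)) (hmv ?N (\<Delta> i) (($) (v i q)))"
        by (rule D_recover[where v="\<lambda>n. ($) (v i n)" and D="\<lambda>n m. D i $$ (n, m)", OF on[OF i] _ p q, symmetric])
           (use \<Delta>e in auto)
      also have "\<dots> = hip ?N (($) (v i p)) (\<lambda>_. 0)"
        by (rule hip_cong) (auto simp: hmv_def \<Delta>0[OF i])
      also have "\<dots> = 0" by (simp add: hip_def)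
      finally show "D i $$ (p, q) = 0\<^sub>m (k i) (k i) $$ (p, q)" using p q by simp
    qed (use Dc in auto)
  qed
  have "mat d1 d1 (\<lambda>(a, b). \<Sum>l < L. complex_of_real (s l) * \<sigma> l $$ (a, b)) = 0\<^sub>m d1 d1"
  proof (rule eq_matI)
    fix a b assume "a < dim_row (0\<^sub>m d1 d1)" "b < dim_col (0\<^sub>m d1 d1)"
    hence a: "a < d1" and b: "b < d1" by auto
    have le: "d1 \<le> ?N" using d2_pos by simp
    have a': "a < ?N" and b': "b < ?N" using a b le by linarith+
    have "(\<Sum>i<M. \<Sum>n<k i. \<Sum>m<k i. D i $$ (n, m) * (v i n $ a) * cnj (v i m $ b)) = 0"
      using D0 by (intro sum.neutral ballI) simp
    moreover have "(\<Sum>i<M. \<Sum>n<k i. \<Sum>m<k i. D i $$ (n, m) * (v i n $ a) * cnj (v i m $ b))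
           + (\<Sum>l < L. complex_of_real (s l) * kron (1\<^sub>m d2) (\<sigma> l) $$ (a, b)) = 0"
      using E a' b' by blast
    ultimately have "(\<Sum>l < L. complex_of_real (s l) * kron (1\<^sub>m d2) (\<sigma> l) $$ (a, b)) = 0" by simp
    moreover have "(\<Sum>l < L. complex_of_real (s l) * kron (1\<^sub>m d2) (\<sigma> l) $$ (a, b)) = (\<Sum>l < L. complex_of_real (s l) * \<sigma> l $$ (a, b))"
      using kron_one_entry_small[OF \<sigma>c d2_pos a b] by simp
    ultimately show "mat d1 d1 (\<lambda>(a, b). \<Sum>l < L. complex_of_real (s l) * \<sigma> l $$ (a, b)) $$ (a, b) = 0\<^sub>m d1 d1 $$ (a, b)"
      using a b by simp
  qed auto
  hence "\<forall>l < L. s l = 0" by (rule \<sigma>_indep)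
  with D0 show ?thesis by blast
qed


theorem theorem2:
  fixes d2 d1 M :: nat
    and T :: "nat \<Rightarrow> complex mat" and \<rho> :: "complex mat"
    and k :: "nat \<Rightarrow> nat" and v :: "nat \<Rightarrow> nat \<Rightarrow> complex vec"
    and \<sigma> :: "nat \<Rightarrow> complex mat"
  assumes d2_pos: "0 < d2" and d1_pos: "0 < d1"
    and tester: "is_tester_with d2 d1 M T \<rho>"
    and v_carrier: "\<And>i n. i < M \<Longrightarrow> n < k i \<Longrightarrow> v i n \<in> carrier_vec (d2 * d1)"
    and v_orthonormal: "\<And>i n m. i < M \<Longrightarrow> n < k i \<Longrightarrow> m < k i \<Longrightarrow>
                          cinner (v i n) (v i m) = (if n = m then 1 else 0)"
    and v_eigen: "\<And>i n. i < M \<Longrightarrow> n < k i \<Longrightarrow> \<exists>ev. T i *\<^sub>v v i n = ev \<cdot>\<^sub>v v i n"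
    and v_span: "\<And>i. i < M \<Longrightarrow> cspan (d2 * d1) (k i) (v i) = supp (T i)"
    and \<sigma>_herm: "\<And>l. l < (vec_space.rank d1 \<rho>)\<^sup>2 - 1 \<Longrightarrow> hermitian d1 (\<sigma> l)"
    and \<sigma>_traceless: "\<And>l. l < (vec_space.rank d1 \<rho>)\<^sup>2 - 1 \<Longrightarrow> mtrace (\<sigma> l) = 0"
    and \<sigma>_supp: "\<And>l. l < (vec_space.rank d1 \<rho>)\<^sup>2 - 1 \<Longrightarrow> supp (\<sigma> l) \<subseteq> supp \<rho>"
    and \<sigma>_indep: "\<And>c :: nat \<Rightarrow> real.
          mat d1 d1 (\<lambda>(a, b). \<Sum>l < (vec_space.rank d1 \<rho>)\<^sup>2 - 1. complex_of_real (c l) * \<sigma> l $$ (a, b))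
            = 0\<^sub>m d1 d1
          \<Longrightarrow> \<forall>l < (vec_space.rank d1 \<rho>)\<^sup>2 - 1. c l = 0"
    and \<sigma>_spans: "\<And>X. hermitian d1 X \<Longrightarrow> mtrace X = 0 \<Longrightarrow> supp X \<subseteq> supp \<rho> \<Longrightarrow>
          \<exists>c :: nat \<Rightarrow> real. X =
            mat d1 d1 (\<lambda>(a, b). \<Sum>l < (vec_space.rank d1 \<rho>)\<^sup>2 - 1. complex_of_real (c l) * \<sigma> l $$ (a, b))"
  shows "extremal_tester d2 d1 M T \<longleftrightarrow>
    (\<forall>(D :: nat \<Rightarrow> complex mat) (s :: nat \<Rightarrow> real).
        (\<forall>i<M. hermitian (k i) (D i)) \<and>
        (\<forall>a < d2 * d1. \<forall>b < d2 * d1.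
           (\<Sum>i<M. \<Sum>n<k i. \<Sum>m<k i. D i $$ (n, m) * (v i n $ a) * cnj (v i m $ b))
           + (\<Sum>l < (vec_space.rank d1 \<rho>)\<^sup>2 - 1.
                complex_of_real (s l) * kron (1\<^sub>m d2) (\<sigma> l) $$ (a, b)) = 0)
      \<longrightarrow> (\<forall>i<M. D i = 0\<^sub>m (k i) (k i)) \<and> (\<forall>l < (vec_space.rank d1 \<rho>)\<^sup>2 - 1. s l = 0))"
  proof
  assume ext: "extremal_tester d2 d1 M T"
  show "\<forall>(D :: nat \<Rightarrow> complex mat) (s :: nat \<Rightarrow> real).
        (\<forall>i<M. hermitian (k i) (D i)) \<and>
        (\<forall>a < d2 * d1. \<forall>b < d2 * d1.
           (\<Sum>i<M. \<Sum>n<k i. \<Sum>m<k i. D i $$ (n, m) * (v i n $ a) * cnj (v i m $ b))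
           + (\<Sum>l < (vec_space.rank d1 \<rho>)\<^sup>2 - 1.
                complex_of_real (s l) * kron (1\<^sub>m d2) (\<sigma> l) $$ (a, b)) = 0)
      \<longrightarrow> (\<forall>i<M. D i = 0\<^sub>m (k i) (k i)) \<and> (\<forall>l < (vec_space.rank d1 \<rho>)\<^sup>2 - 1. s l = 0)"
  proof (intro allI impI)
    fix D :: "nat \<Rightarrow> complex mat" and s :: "nat \<Rightarrow> real"
    assume H: "(\<forall>i<M. hermitian (k i) (D i)) \<and>
        (\<forall>a < d2 * d1. \<forall>b < d2 * d1.
           (\<Sum>i<M. \<Sum>n<k i. \<Sum>m<k i. D i $$ (n, m) * (v i n $ a) * cnj (v i m $ b))
           + (\<Sum>l < (vec_space.rank d1 \<rho>)\<^sup>2 - 1.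
                complex_of_real (s l) * kron (1\<^sub>m d2) (\<sigma> l) $$ (a, b)) = 0)"
    show "(\<forall>i<M. D i = 0\<^sub>m (k i) (k i)) \<and> (\<forall>l < (vec_space.rank d1 \<rho>)\<^sup>2 - 1. s l = 0)"
      by (rule nec[OF d2_pos tester v_carrier v_orthonormal v_eigen v_span \<sigma>_herm \<sigma>_traceless \<sigma>_indep ext])
         (use H in blast)+
  qed
next
  assume triv: "\<forall>(D :: nat \<Rightarrow> complex mat) (s :: nat \<Rightarrow> real).
        (\<forall>i<M. hermitian (k i) (D i)) \<and>
        (\<forall>a < d2 * d1. \<forall>b < d2 * d1.
           (\<Sum>i<M. \<Sum>n<k i. \<Sum>m<k i. D i $$ (n, m) * (v i n $ a) * cnj (v i m $ b))
           + (\<Sum>l < (vec_space.rank d1 \<rho>)\<^sup>2 - 1.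
                complex_of_real (s l) * kron (1\<^sub>m d2) (\<sigma> l) $$ (a, b)) = 0)
      \<longrightarrow> (\<forall>i<M. D i = 0\<^sub>m (k i) (k i)) \<and> (\<forall>l < (vec_space.rank d1 \<rho>)\<^sup>2 - 1. s l = 0)"
  show "extremal_tester d2 d1 M T"
  proof (rule suff[OF d2_pos tester v_carrier v_orthonormal v_eigen v_span \<sigma>_herm \<sigma>_spans])
    fix D :: "nat \<Rightarrow> complex mat" and s :: "nat \<Rightarrow> real"
    assume "\<forall>i<M. hermitian (k i) (D i)" "\<forall>a < d2 * d1. \<forall>b < d2 * d1.
           (\<Sum>i<M. \<Sum>n<k i. \<Sum>m<k i. D i $$ (n, m) * (v i n $ a) * cnj (v i m $ b))
           + (\<Sum>l < (vec_space.rank d1 \<rho>)\<^sup>2 - 1.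
                complex_of_real (s l) * kron (1\<^sub>m d2) (\<sigma> l) $$ (a, b)) = 0"
    thus "\<forall>i<M. D i = 0\<^sub>m (k i) (k i)" using spec[OF spec[OF triv, of D], of s] by blast
  qed
qed

end
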